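(* For any special object $L$ of $\mathcal V$, the degree $\beta(L)$ of the minimal polynomial $m_L(x)$ satisfies $\beta(L)\equiv t\pmod 2$.
   Context: Let $\Bbbk$ be a field of characteristic $\neq2$, $t\in\{0,1\}$, and let $\mathcal{NB}_t$ be the nil-Brauer category, regarded as an ungraded strict $\Bbbk$-linear monoidal category (tensor $\star$, unit $\mathbb1$, composition $\circ$) generated by an object $B$ and morphisms $x:B\to B$, $\tau:B\star B\to B\star B$, $\cap:B\star B\to\mathbb1$, $\cup:\mathbb1\to B\star B$ with relations ($1=1_B$): $\tau\circ\tau=0$; $(\tau\star1)\circ(1\star\tau)\circ(\tau\star1)=(1\star\tau)\circ(\tau\star1)\circ(1\star\tau)$; $\cap\circ\cup=t1_{\mathbb1}$; $(\cap\star1)\circ(1\star\cup)=1=(1\star\cap)\circ(\cup\star1)$; $\cap\circ\tau=0$; $(1\star\cap)\circ(\tau\star1)=(\cap\star1)\circ(1\star\tau)$; $(x\star1)\circ\tau-\tau\circ(1\star x)=1\star1-\cup\circ\cap$; $\cap\circ(1\star x)=-\cap\circ(x\star1)$. Let $\mathcal V$ be a strict $\mathcal{NB}_t$-module category, i.e. a $\Bbbk$-linear category with a strict $\Bbbk$-linear monoidal functor $\mu$ from $\mathcal{NB}_t$ to the monoidal category of $\Bbbk$-linear endofunctors of $\mathcal V$; write $B$ for $\mu(B)$. An object $L$ is special if $\mathrm{End}_{\mathcal V}(L)=\Bbbk$ and $\mathrm{End}_{\mathcal V}(BL)$ is finite-dimensional; $m_L(x)$ is the minimal polynomial of $\mu(x)_L:BL\to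 BL$ (equal to $1$ if $BL=0$). *)

theory Defs
  imports "HOL-Computational_Algebra.Polynomial"
begin

text \<open>Objects are the elements of type 'o;
  morphisms live in a common type 'm, with hom-sets Hom a b.  Comp g f is g after f.\<close>

record ('o, 'm, 'k) kcat =
  Hom  :: "'o \<Rightarrow> 'o \<Rightarrow> 'm set"
  Comp :: "'m \<Rightarrow> 'm \<Rightarrow> 'm"
  Id   :: "'o \<Rightarrow> 'm"
  Add  :: "'m \<Rightarrow> 'm \<Rightarrow> 'm"
  Smul :: "'k \<Rightarrow> 'm \<Rightarrow> 'm"
  Zero :: "'o \<Rightarrow> 'o \<Rightarrow> 'm"

definition Sub :: "('o, 'm, 'k::field) kcat \<Rightarrow> 'm \<Rightarrow> 'm \<Rightarrow> 'm" where
  "Sub C f g = Add C f (Smul C (-1) g)"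

definition kcat :: "('o, 'm, 'k::field) kcat \<Rightarrow> bool" where
  "kcat C \<longleftrightarrow>
    (\<forall>a b. Zero C a b \<in> Hom C a b
       \<and> (\<forall>f\<in>Hom C a b. \<forall>g\<in>Hom C a b. Add C f g \<in> Hom C a b)
       \<and> (\<forall>c. \<forall>f\<in>Hom C a b. Smul C c f \<in> Hom C a b)
       \<and> (\<forall>f\<in>Hom C a b. \<forall>g\<in>Hom C a b. \<forall>h\<in>Hom C a b.
             Add C (Add C f g) h = Add C f (Add C g h))
       \<and> (\<forall>f\<in>Hom C a b. \<forall>g\<in>Hom C a b. Add C f g = Add C g f)
       \<and> (\<forall>f\<in>Hom C a b. Add C f (Zero C a b) = f)
       \<and> (\<forall>f\<in>Hom C a b. Add C f (Smul C (-1) f) = Zero C a b)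
       \<and> (\<forall>f\<in>Hom C a b. Smul C 1 f = f)
       \<and> (\<forall>c d. \<forall>f\<in>Hom C a b. Smul C c (Smul C d f) = Smul C (c * d) f)
       \<and> (\<forall>c d. \<forall>f\<in>Hom C a b. Smul C (c + d) f = Add C (Smul C c f) (Smul C d f))
       \<and> (\<forall>c. \<forall>f\<in>Hom C a b. \<forall>g\<in>Hom C a b.
             Smul C c (Add C f g) = Add C (Smul C c f) (Smul C c g)))
  \<and> (\<forall>a. Id C a \<in> Hom C a a)
  \<and> (\<forall>a b c. \<forall>f\<in>Hom C a b. \<forall>g\<in>Hom C b c. Comp C g f \<in> Hom C a c)
  \<and> (\<forall>a b c d. \<forall>f\<in>Hom C a b. \<forall>g\<in>Hom C b c. \<forall>h\<in>Hom C c d.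
        Comp C h (Comp C g f) = Comp C (Comp C h g) f)
  \<and> (\<forall>a b. \<forall>f\<in>Hom C a b. Comp C (Id C b) f = f \<and> Comp C f (Id C a) = f)
  \<and> (\<forall>a b c. \<forall>f\<in>Hom C a b. \<forall>g\<in>Hom C b c. \<forall>g'\<in>Hom C b c.
        Comp C (Add C g g') f = Add C (Comp C g f) (Comp C g' f))
  \<and> (\<forall>a b c. \<forall>f\<in>Hom C a b. \<forall>f'\<in>Hom C a b. \<forall>g\<in>Hom C b c.
        Comp C g (Add C f f') = Add C (Comp C g f) (Comp C g f'))
  \<and> (\<forall>a b c k. \<forall>f\<in>Hom C a b. \<forall>g\<in>Hom C b c.
        Comp C (Smul C k g) f = Smul C k (Comp C g f) \<and> Comp C g (Smul C k f) = Smul C k (Comp C g f))"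

definition klin_endofunctor :: "('o, 'm, 'k::field) kcat \<Rightarrow> ('o \<Rightarrow> 'o) \<Rightarrow> ('m \<Rightarrow> 'm) \<Rightarrow> bool" where
  "klin_endofunctor C Bo Bm \<longleftrightarrow>
     (\<forall>a b. \<forall>f\<in>Hom C a b. Bm f \<in> Hom C (Bo a) (Bo b))
   \<and> (\<forall>a. Bm (Id C a) = Id C (Bo a))
   \<and> (\<forall>a b c. \<forall>f\<in>Hom C a b. \<forall>g\<in>Hom C b c. Bm (Comp C g f) = Comp C (Bm g) (Bm f))
   \<and> (\<forall>a b. \<forall>f\<in>Hom C a b. \<forall>g\<in>Hom C a b. Bm (Add C f g) = Add C (Bm f) (Bm g))
   \<and> (\<forall>a b k. \<forall>f\<in>Hom C a b. Bm (Smul C k f) = Smul C k (Bm f))"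

text \<open>Since NB_t is the strict k-linear
  monoidal category presented by the generator B and the generating morphisms x, tau,
  cap, cup subject to the listed relations, a strict k-linear monoidal functor
  mu from NB_t to the k-linear endofunctors of C is the same as: a k-linear endofunctor
  B = mu(B) (here (Bo, Bm)) together with natural transformations
  x : B => B, tau : BB => BB, cap : BB => Id, cup : Id => BB (components indexed by
  objects) satisfying the relations, where the tensor product of endofunctors is
  composition, F*G = F o G, so that for natural transformations
  (f * 1_B)_L = f_(B L) and (1_B * g)_L = B(g_L).\<close>

definition NB_module :: "('o, 'm, 'k::field) kcat \<Rightarrow> nat \<Rightarrow> ('o \<Rightarrow> 'o) \<Rightarrow> ('m \<Rightarrow> 'm)
    \<Rightarrow> ('o \<Rightarrow> 'm) \<Rightarrow> ('o \<Rightarrow> 'm) \<Rightarrow> ('o \<Rightarrow> 'm) \<Rightarrow> ('o \<Rightarrow> 'm) \<Rightarrow> bool" where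
  "NB_module C t Bo Bm x tau cap cup \<longleftrightarrow>
     kcat C \<and> klin_endofunctor C Bo Bm
   \<and> (\<forall>L. x L \<in> Hom C (Bo L) (Bo L)
        \<and> tau L \<in> Hom C (Bo (Bo L)) (Bo (Bo L))
        \<and> cap L \<in> Hom C (Bo (Bo L)) L
        \<and> cup L \<in> Hom C L (Bo (Bo L)))
   \<comment> \<open>naturality\<close>
   \<and> (\<forall>a b. \<forall>f\<in>Hom C a b.
        Comp C (x b) (Bm f) = Comp C (Bm f) (x a)
      \<and> Comp C (tau b) (Bm (Bm f)) = Comp C (Bm (Bm f)) (tau a)
      \<and> Comp C (cap b) (Bm (Bm f)) = Comp C f (cap a)
      \<and> Comp C (cup b) f = Comp C (Bm (Bm f)) (cup a))
   \<comment> \<open>relations\<close>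
   \<and> (\<forall>L.
        Comp C (tau L) (tau L) = Zero C (Bo (Bo L)) (Bo (Bo L))
      \<and> Comp C (tau (Bo L)) (Comp C (Bm (tau L)) (tau (Bo L)))
          = Comp C (Bm (tau L)) (Comp C (tau (Bo L)) (Bm (tau L)))
      \<and> Comp C (cap L) (cup L) = Smul C (of_nat t) (Id C L)
      \<and> Comp C (cap (Bo L)) (Bm (cup L)) = Id C (Bo L)
      \<and> Comp C (Bm (cap L)) (cup (Bo L)) = Id C (Bo L)
      \<and> Comp C (cap L) (tau L) = Zero C (Bo (Bo L)) L
      \<and> Comp C (Bm (cap L)) (tau (Bo L)) = Comp C (cap (Bo L)) (Bm (tau L))
      \<and> Sub C (Comp C (x (Bo L)) (tau L)) (Comp C (tau L) (Bm (x L)))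
          = Sub C (Id C (Bo (Bo L))) (Comp C (cup L) (cap L))
      \<and> Comp C (cap L) (Bm (x L)) = Smul C (-1) (Comp C (cap L) (x (Bo L))))"

definition lin_comb :: "('o, 'm, 'k::field) kcat \<Rightarrow> 'o \<Rightarrow> 'o \<Rightarrow> ('k \<times> 'm) list \<Rightarrow> 'm" where
  "lin_comb C a b cs = foldr (\<lambda>(c, f) acc. Add C (Smul C c f) acc) cs (Zero C a b)"

definition fin_dim_hom :: "('o, 'm, 'k::field) kcat \<Rightarrow> 'o \<Rightarrow> 'o \<Rightarrow> bool" where
  "fin_dim_hom C a b \<longleftrightarrow> (\<exists>S. finite S \<and> S \<subseteq> Hom C a b \<and>
      (\<forall>f\<in>Hom C a b. \<exists>cs. set (map snd cs) \<subseteq> S \<and> f = lin_comb C a b cs))"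

definition special :: "('o, 'm, 'k::field) kcat \<Rightarrow> ('o \<Rightarrow> 'o) \<Rightarrow> 'o \<Rightarrow> bool" where
  "special C Bo L \<longleftrightarrow>
     Hom C L L = range (\<lambda>c. Smul C c (Id C L)) \<and> inj (\<lambda>c. Smul C c (Id C L))
   \<and> fin_dim_hom C (Bo L) (Bo L)"

definition mpow :: "('o, 'm, 'k::field) kcat \<Rightarrow> 'o \<Rightarrow> 'm \<Rightarrow> nat \<Rightarrow> 'm" where
  "mpow C a f n = ((\<lambda>g. Comp C f g) ^^ n) (Id C a)"

definition poly_eval :: "('o, 'm, 'k::field) kcat \<Rightarrow> 'o \<Rightarrow> 'k poly \<Rightarrow> 'm \<Rightarrow> 'm" where
  "poly_eval C a p f = lin_comb C a a (map (\<lambda>i. (coeff p i, mpow C a f i)) [0..<Suc (degree p)])"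

text \<open>The minimal polynomial: the monic polynomial of least degree annihilating f
  (this equals 1 when End(a) = 0, e.g. when B L = 0).\<close>

definition is_min_poly :: "('o, 'm, 'k::field) kcat \<Rightarrow> 'o \<Rightarrow> 'm \<Rightarrow> 'k poly \<Rightarrow> bool" where
  "is_min_poly C a f p \<longleftrightarrow>
     lead_coeff p = 1 \<and> poly_eval C a p f = Zero C a a
   \<and> (\<forall>q. lead_coeff q = 1 \<and> poly_eval C a q f = Zero C a a \<longrightarrow> degree p \<le> degree q)"

definition min_poly :: "('o, 'm, 'k::field) kcat \<Rightarrow> 'o \<Rightarrow> 'm \<Rightarrow> 'k poly" where
  "min_poly C a f = (THE p. is_min_poly C a f p)"

end

theory Submission
  imports Defs
begin

interpretation pv: vector_space "smult :: 'a::field \<Rightarrow> 'a poly \<Rightarrow> 'a poly"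
  by unfold_locales (simp_all add: smult_add_right smult_add_left)

lemma lin_polyI: fixes f :: "'a::field poly \<Rightarrow> 'a poly"
  assumes "\<And>p q. f (p + q) = f p + f q" "\<And>c p. f (smult c p) = smult c (f p)"
  shows "Vector_Spaces.linear smult smult f"
  unfolding Vector_Spaces.linear_iff using assms pv.vector_space_axioms by blast

lemma span_disj: fixes A B :: "'a::field poly set"
  assumes ind: "pv.independent (A \<union> B)" and fA: "finite A" and fB: "finite B" and dis: "A \<inter> B = {}"
    and vA: "v \<in> pv.span A" and vB: "v \<in> pv.span B" shows "v = 0"
proof -
  obtain u where u: "v = (\<Sum>a\<in>A. smult (u a) a)" using vA pv.span_finite[OF fA] by auto
  obtain u' where u': "v = (\<Sum>b\<in>B. smult (u' b) b)" using vB pv.span_finite[OF fB] by auto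
  define g where "g x = (if x \<in> A then u x else - u' x)" for x
  have sA: "(\<Sum>x\<in>A. smult (g x) x) = v" unfolding u g_def by (rule sum.cong) auto
  have sB: "(\<Sum>x\<in>B. smult (g x) x) = - v"
  proof -
    have "(\<Sum>x\<in>B. smult (g x) x) = (\<Sum>x\<in>B. - smult (u' x) x)"
      using dis unfolding g_def by (intro sum.cong) auto
    also have "\<dots> = - v" unfolding u' by (simp add: sum_negf)
    finally show ?thesis .
  qed
  have "(\<Sum>x\<in>A \<union> B. smult (g x) x) = (\<Sum>x\<in>A. smult (g x) x) + (\<Sum>x\<in>B. smult (g x) x)"
    using sum.union_disjoint[OF fA fB dis] by simp
  also have "\<dots> = 0" using sA sB by simp
  finally have z: "(\<Sum>x\<in>A \<union> B. smult (g x) x) = 0" .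
  have "\<And>x. x \<in> A \<Longrightarrow> g x = 0"
    using pv.independentD[OF ind _ subset_refl z] fA fB by blast
  then have "\<And>x. x \<in> A \<Longrightarrow> u x = 0" unfolding g_def by (metis (full_types))
  then show "v = 0" unfolding u by simp
qed

lemma rank_nullity:
  fixes f :: "'a::field poly \<Rightarrow> 'a poly" and V F :: "'a poly set"
  assumes lin: "Vector_Spaces.linear smult smult f" and V: "pv.subspace V" and F: "finite F" and VF: "V \<subseteq> pv.span F"
  shows "pv.dim V = pv.dim {v\<in>V. f v = 0} + pv.dim (f ` V)"
proof -
  interpret lf: Vector_Spaces.linear smult smult f by (rule lin)
  let ?N = "{v\<in>V. f v = 0}"
  obtain B0 where B0: "B0 \<subseteq> ?N" "pv.independent B0" "?N \<subseteq> pv.span B0" "card B0 = pv.dim ?N"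
    by (rule pv.basis_exists)
  have B0V: "B0 \<subseteq> V" using B0 by auto
  obtain B where B: "B0 \<subseteq> B" "B \<subseteq> V" "pv.independent B" "V \<subseteq> pv.span B"
    using pv.maximal_independent_subset_extend[OF B0V B0(2)] by blast
  have fB: "finite B" using pv.independent_span_bound[OF F B(3)] B(2) VF by auto
  have cB: "card B = pv.dim V" using pv.basis_card_eq_dim[OF B(2) B(4) B(3)] .
  define B1 where "B1 = B - B0"
  have fB0: "finite B0" using fB B(1) finite_subset by blast
  have fB1: "finite B1" using fB unfolding B1_def by simp
  have BU: "B = B0 \<union> B1" using B(1) unfolding B1_def by blast
  have dis: "B0 \<inter> B1 = {}" unfolding B1_def by blast
  have cardB: "card B = card B0 + card B1" using BU card_Un_disjoint[OF fB0 fB1 dis] by simp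
  have B1V: "B1 \<subseteq> V" using B(2) unfolding B1_def by blast
  have spB1V: "pv.span B1 \<subseteq> V" using pv.span_minimal[OF B1V V] .
  have ind1: "pv.independent B1" using pv.independent_mono[OF B(3)] unfolding B1_def by blast
  have inj: "inj_on f (pv.span B1)"
  proof -
    have "\<forall>x\<in>pv.span B1. f x = 0 \<longrightarrow> x = 0"
    proof (intro ballI impI)
      fix v assume v1: "v \<in> pv.span B1" and fv: "f v = 0"
      then have "v \<in> ?N" using spB1V by auto
      then have v0: "v \<in> pv.span B0" using B0(3) by auto
      show "v = 0" using span_disj[of B0 B1 v] BU B(3) fB0 fB1 dis v0 v1 by simp
    qed
    then show ?thesis using lf.inj_on_iff_eq_0[OF pv.subspace_span] by blast
  qed
  have indf: "pv.independent (f ` B1)" using lf.independent_injective_image[OF ind1 inj] .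
  have card1: "card (f ` B1) = card B1"
    using card_image[OF inj_on_subset[OF inj pv.span_superset]] .
  have sp: "f ` V \<subseteq> pv.span (f ` B1)"
  proof -
    have "f ` B \<subseteq> pv.span (f ` B1)"
    proof
      fix y assume "y \<in> f ` B"
      then obtain b where b: "b \<in> B" "y = f b" by blast
      show "y \<in> pv.span (f ` B1)"
      proof (cases "b \<in> B0")
        case True
        then have "y = 0" using b B0(1) by auto
        then show ?thesis using pv.span_zero by simp
      next
        case False
        then have "b \<in> B1" using b unfolding B1_def by blast
        then show ?thesis using b pv.span_superset by blast
      qed
    qed
    then have "pv.span (f ` B) \<subseteq> pv.span (f ` B1)" using pv.span_minimal pv.subspace_span by blast
    moreover have "f ` V \<subseteq> pv.span (f ` B)" using lf.spans_image[OF B(4)] .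
    ultimately show ?thesis by blast
  qed
  have sub1: "f ` B1 \<subseteq> f ` V" using B1V by blast
  have "card (f ` B1) = pv.dim (f ` V)" using pv.basis_card_eq_dim[OF sub1 sp indf] .
  then show ?thesis using cB cardB card1 B0(4) by simp
qed

lemma card_indep_le_dim:
  fixes S V F :: "'a::field poly set"
  assumes S: "pv.independent S" "S \<subseteq> V" and F: "finite F" "V \<subseteq> pv.span F"
  shows "card S \<le> pv.dim V"
proof -
  obtain Bv where Bv: "Bv \<subseteq> V" "pv.independent Bv" "V \<subseteq> pv.span Bv" "card Bv = pv.dim V"
    by (rule pv.basis_exists)
  have fBv: "finite Bv" using pv.independent_span_bound[OF F(1) Bv(2)] Bv(1) F(2) by auto
  have "card S \<le> card Bv" using pv.independent_span_bound[OF fBv S(1)] S(2) Bv(3) by auto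
  then show ?thesis using Bv(4) by simp
qed

lemma dim_mono_fin:
  fixes U V F :: "'a::field poly set"
  assumes "U \<subseteq> V" "finite F" "V \<subseteq> pv.span F"
  shows "pv.dim U \<le> pv.dim V"
proof -
  obtain Bu where Bu: "Bu \<subseteq> U" "pv.independent Bu" "U \<subseteq> pv.span Bu" "card Bu = pv.dim U"
    by (rule pv.basis_exists)
  show ?thesis using card_indep_le_dim[OF Bu(2) _ assms(2,3)] Bu(1,4) assms(1) by auto
qed

lemma sum_delta_mult: "(\<Sum>i<(n::nat). (c i :: 'a::comm_ring_1) * (if i = k then 1 else 0)) = (if k < n then c k else 0)"
  by (induction n) (auto simp: less_Suc_eq)

definition PSn :: "nat \<Rightarrow> 'a::zero poly set" where "PSn n = {q. \<forall>i\<ge>n. coeff q i = 0}"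
definition Mn :: "nat \<Rightarrow> 'a::{zero,one} poly set" where "Mn n = (\<lambda>i. monom 1 i) ` {..<n}"

lemma PSn_subspace: "pv.subspace (PSn n)"
  unfolding pv.subspace_def PSn_def by simp

lemma Mn_finite: "finite (Mn n)" unfolding Mn_def by simp

lemma Mn_sub: "Mn n \<subseteq> (PSn n :: 'a::field poly set)" unfolding Mn_def PSn_def by (auto simp: coeff_monom)

lemma PSn_span: "(PSn n :: 'a::field poly set) \<subseteq> pv.span (Mn n)"
proof
  fix q :: "'a poly" assume q: "q \<in> PSn n"
  have "q = (\<Sum>i<n. smult (coeff q i) (monom 1 i))"
  proof (rule poly_eqI)
    fix k
    have "coeff (\<Sum>i<n. smult (coeff q i) (monom 1 i)) k = (if k < n then coeff q k else 0)"
      by (simp add: coeff_sum coeff_monom sum_delta_mult)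
    also have "\<dots> = coeff q k" using q unfolding PSn_def by (simp add: not_less)
    finally show "coeff q k = coeff (\<Sum>i<n. smult (coeff q i) (monom 1 i)) k" by simp
  qed
  also have "\<dots> \<in> pv.span (Mn n)"
    by (intro pv.span_sum pv.span_scale pv.span_base) (auto simp: Mn_def)
  finally show "q \<in> pv.span (Mn n)" .
qed

lemma Mn_indep: "pv.independent (Mn n :: 'a::field poly set)"
proof (rule pv.independent_if_scalars_zero[OF Mn_finite])
  fix g :: "'a poly \<Rightarrow> 'a" and x :: "'a poly" assume s: "(\<Sum>x\<in>Mn n. smult (g x) x) = 0" and x: "x \<in> Mn n"
  have inj: "inj_on (\<lambda>i. monom (1::'a) i) {..<n}" by (auto simp: inj_on_def monom_eq_iff')
  have "(\<Sum>x\<in>Mn n. smult (g x) x) = (\<Sum>i<n. smult (g (monom 1 i)) (monom 1 i))"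
    unfolding Mn_def by (rule sum.reindex[OF inj, unfolded o_def])
  then have z: "(\<Sum>i<n. smult (g (monom 1 i)) (monom 1 i)) = 0" using s by simp
  obtain j where j: "j < n" "x = monom 1 j" using x unfolding Mn_def by auto
  have "coeff (\<Sum>i<n. smult (g (monom 1 i)) (monom 1 i)) j = g (monom 1 j)"
    using j by (simp add: coeff_sum coeff_monom sum_delta_mult)
  then show "g x = 0" using z j by simp
qed

lemma Mn_card: "card (Mn n :: 'a::field poly set) = n"
proof -
  have inj: "inj_on (\<lambda>i. monom (1::'a) i) {..<n}" by (auto simp: inj_on_def monom_eq_iff')
  show ?thesis unfolding Mn_def using card_image[OF inj] by simp
qed

lemma dim_PSn: "pv.dim (PSn n :: 'a::field poly set) = n"
proof -
  have "card (Mn n :: 'a poly set) = pv.dim (PSn n :: 'a poly set)"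
    using pv.basis_card_eq_dim[OF Mn_sub[of n] PSn_span[of n] Mn_indep[of n]] by simp
  then show ?thesis using Mn_card[of n, where 'a='a] by simp
qed

locale kc = fixes C :: "('o,'m,'k::field) kcat" assumes kc: "kcat C"
begin

lemma zero_in[simp,intro]: "Zero C a b \<in> Hom C a b" using kc unfolding kcat_def by simp
lemma add_in[intro,simp]: "f \<in> Hom C a b \<Longrightarrow> g \<in> Hom C a b \<Longrightarrow> Add C f g \<in> Hom C a b"
  using kc unfolding kcat_def by simp
lemma smul_in[intro,simp]: "f \<in> Hom C a b \<Longrightarrow> Smul C c f \<in> Hom C a b"
  using kc unfolding kcat_def by simp
lemma add_assoc: "f \<in> Hom C a b \<Longrightarrow> g \<in> Hom C a b \<Longrightarrow> h \<in> Hom C a b \<Longrightarrow>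
   Add C (Add C f g) h = Add C f (Add C g h)"
  using kc unfolding kcat_def by simp
lemma add_comm: "f \<in> Hom C a b \<Longrightarrow> g \<in> Hom C a b \<Longrightarrow> Add C f g = Add C g f"
  using kc unfolding kcat_def by simp
lemma add_zero: "f \<in> Hom C a b \<Longrightarrow> Add C f (Zero C a b) = f"
  using kc unfolding kcat_def by simp
lemma add_neg: "f \<in> Hom C a b \<Longrightarrow> Add C f (Smul C (-1) f) = Zero C a b"
  using kc unfolding kcat_def by simp
lemma smul_one: "f \<in> Hom C a b \<Longrightarrow> Smul C 1 f = f"
  using kc unfolding kcat_def by simp
lemma smul_smul: "f \<in> Hom C a b \<Longrightarrow> Smul C c (Smul C d f) = Smul C (c * d) f"
  using kc unfolding kcat_def by simp
lemma smul_add_scalar: "f \<in> Hom C a b \<Longrightarrow> Smul C (c + d) f = Add C (Smul C c f) (Smul C d f)"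
  using kc unfolding kcat_def by simp
lemma smul_add: "f \<in> Hom C a b \<Longrightarrow> g \<in> Hom C a b \<Longrightarrow> Smul C c (Add C f g) = Add C (Smul C c f) (Smul C c g)"
  using kc unfolding kcat_def by simp
lemma id_in[simp,intro]: "kcat.Id C a \<in> Hom C a a"
  using kc unfolding kcat_def by simp
lemma comp_in[intro]: "f \<in> Hom C a b \<Longrightarrow> g \<in> Hom C b c \<Longrightarrow> Comp C g f \<in> Hom C a c"
  using kc unfolding kcat_def by simp
lemma comp_assoc: "f \<in> Hom C a b \<Longrightarrow> g \<in> Hom C b c \<Longrightarrow> h \<in> Hom C c d \<Longrightarrow>
   Comp C h (Comp C g f) = Comp C (Comp C h g) f"
  using kc unfolding kcat_def by simp
lemma id_left: "f \<in> Hom C a b \<Longrightarrow> Comp C (kcat.Id C b) f = f"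
  using kc unfolding kcat_def by simp
lemma id_right: "f \<in> Hom C a b \<Longrightarrow> Comp C f (kcat.Id C a) = f"
  using kc unfolding kcat_def by simp
lemma comp_add_left: "f \<in> Hom C a b \<Longrightarrow> g \<in> Hom C b c \<Longrightarrow> g' \<in> Hom C b c \<Longrightarrow>
   Comp C (Add C g g') f = Add C (Comp C g f) (Comp C g' f)"
  using kc unfolding kcat_def by simp
lemma comp_add_right: "f \<in> Hom C a b \<Longrightarrow> f' \<in> Hom C a b \<Longrightarrow> g \<in> Hom C b c \<Longrightarrow>
   Comp C g (Add C f f') = Add C (Comp C g f) (Comp C g f')"
  using kc unfolding kcat_def by simp
lemma comp_smul_left: "f \<in> Hom C a b \<Longrightarrow> g \<in> Hom C b c \<Longrightarrow> Comp C (Smul C k g) f = Smul C k (Comp C g f)"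
  using kc unfolding kcat_def by simp
lemma comp_smul_right: "f \<in> Hom C a b \<Longrightarrow> g \<in> Hom C b c \<Longrightarrow> Comp C g (Smul C k f) = Smul C k (Comp C g f)"
  using kc unfolding kcat_def by simp

lemma zero_add: "f \<in> Hom C a b \<Longrightarrow> Add C (Zero C a b) f = f"
  using add_comm[of f a b "Zero C a b"] add_zero[of f a b] by simp

lemma smul_zero_scalar: "f \<in> Hom C a b \<Longrightarrow> Smul C 0 f = Zero C a b"
proof -
  assume f: "f \<in> Hom C a b"
  have "Smul C 0 f = Add C f (Smul C (-1) f)" using smul_add_scalar[OF f, of 1 "-1"] smul_one[OF f] by simp
  also have "\<dots> = Zero C a b" using f by (rule add_neg)
  finally show ?thesis .
qed

lemma smul_Zero[simp]: "Smul C c (Zero C a b) = Zero C a b"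
proof -
  have "Smul C c (Zero C a b) = Smul C c (Smul C 0 (Zero C a b))" using smul_zero_scalar[OF zero_in, of a b] by simp
  also have "\<dots> = Smul C 0 (Zero C a b)" using smul_smul[OF zero_in, of c 0 a b] by simp
  also have "\<dots> = Zero C a b" using smul_zero_scalar[OF zero_in, of a b] by simp
  finally show ?thesis .
qed

lemma zero_add_simp[simp]: "Add C (Zero C a b) (Zero C a b) = Zero C a b"
  by (simp add: add_zero)

lemma add_left_neg: "f \<in> Hom C a b \<Longrightarrow> Add C (Smul C (-1) f) f = Zero C a b"
  using add_neg[of f a b] add_comm[of f a b "Smul C (-1) f"] by simp

lemma add_cancel_left: assumes "f \<in> Hom C a b" "g \<in> Hom C a b" "h \<in> Hom C a b"
  and "Add C f g = Add C f h" shows "g = h"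
proof -
  have "g = Add C (Add C (Smul C (-1) f) f) g" using assms by (simp add: add_left_neg zero_add)
  also have "\<dots> = Add C (Smul C (-1) f) (Add C f g)" using add_assoc[OF smul_in[OF assms(1)] assms(1) assms(2)] by simp
  also have "\<dots> = Add C (Smul C (-1) f) (Add C f h)" using assms by simp
  also have "\<dots> = Add C (Add C (Smul C (-1) f) f) h" using add_assoc[OF smul_in[OF assms(1)] assms(1) assms(3)] by simp
  also have "\<dots> = h" using assms by (simp add: add_left_neg zero_add)
  finally show ?thesis .
qed

lemma add_eq_zero_neg: assumes "f \<in> Hom C a b" "g \<in> Hom C a b" "Add C f g = Zero C a b"
  shows "g = Smul C (-1) f"
  using add_cancel_left[of f a b g "Smul C (-1) f"] assms add_neg by simp

lemma comp_zero_right: assumes g: "g \<in> Hom C b c" shows "Comp C g (Zero C a b) = Zero C a c"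
proof -
  have "Comp C g (Zero C a b) = Comp C g (Smul C 0 (Zero C a b))" using smul_zero_scalar[OF zero_in, of a b] by simp
  also have "\<dots> = Smul C 0 (Comp C g (Zero C a b))" using comp_smul_right[OF zero_in g] by simp
  also have "\<dots> = Zero C a c" using smul_zero_scalar[OF comp_in[OF zero_in g]] by simp
  finally show ?thesis .
qed
lemma comp_zero_left: assumes f: "f \<in> Hom C a b" shows "Comp C (Zero C b c) f = Zero C a c"
proof -
  have "Comp C (Zero C b c) f = Comp C (Smul C 0 (Zero C b c)) f" using smul_zero_scalar[OF zero_in, of b c] by simp
  also have "\<dots> = Smul C 0 (Comp C (Zero C b c) f)" using comp_smul_left[OF f zero_in] by simp
  also have "\<dots> = Zero C a c" using smul_zero_scalar[OF comp_in[OF f zero_in]] by simp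
  finally show ?thesis .
qed

lemma sub_in[intro,simp]: "f \<in> Hom C a b \<Longrightarrow> g \<in> Hom C a b \<Longrightarrow> Sub C f g \<in> Hom C a b"
  unfolding Sub_def by blast

lemma smul_zero_obj: "f \<in> Hom C a b \<Longrightarrow> Smul C c f = Zero C a b \<Longrightarrow> c \<noteq> 0 \<Longrightarrow> f = Zero C a b"
proof -
  assume f: "f \<in> Hom C a b" and z: "Smul C c f = Zero C a b" and c: "c \<noteq> 0"
  have "f = Smul C (inverse c * c) f" using c smul_one[OF f] by simp
  also have "\<dots> = Smul C (inverse c) (Smul C c f)" using smul_smul[OF f] by simp
  also have "\<dots> = Zero C a b" using z by simp
  finally show ?thesis .
qed

lemma add_swap: "f \<in> Hom C a b \<Longrightarrow> g \<in> Hom C a b \<Longrightarrow> h \<in> Hom C a b \<Longrightarrow>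
   Add C f (Add C g h) = Add C g (Add C f h)"
proof -
  assume f: "f \<in> Hom C a b" and g: "g \<in> Hom C a b" and h: "h \<in> Hom C a b"
  have "Add C f (Add C g h) = Add C (Add C f g) h" using add_assoc[OF f g h] by simp
  also have "\<dots> = Add C (Add C g f) h" using add_comm[OF f g] by simp
  also have "\<dots> = Add C g (Add C f h)" using add_assoc[OF g f h] by simp
  finally show ?thesis .
qed

lemma smul_neg_add: "f \<in> Hom C a b \<Longrightarrow> Smul C (-c) f = Smul C (-1) (Smul C c f)"
  by (simp add: smul_smul)

lemma lc_Nil[simp]: "lin_comb C a b [] = Zero C a b" unfolding lin_comb_def by simp
lemma lc_Cons[simp]: "lin_comb C a b ((c,f)#cs) = Add C (Smul C c f) (lin_comb C a b cs)"
  unfolding lin_comb_def by simp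

lemma lc_in[intro,simp]: "snd ` set cs \<subseteq> Hom C a b \<Longrightarrow> lin_comb C a b cs \<in> Hom C a b"
  by (induction cs) (auto)

lemma lc_append: "snd ` set cs \<subseteq> Hom C a b \<Longrightarrow> snd ` set ds \<subseteq> Hom C a b \<Longrightarrow>
  lin_comb C a b (cs @ ds) = Add C (lin_comb C a b cs) (lin_comb C a b ds)"
proof (induction cs)
  case Nil then show ?case by (simp add: zero_add)
next
  case (Cons p cs)
  obtain c f where p: "p = (c,f)" by (cases p)
  have f: "f \<in> Hom C a b" using Cons.prems p by auto
  have h1: "lin_comb C a b cs \<in> Hom C a b" using Cons.prems by auto
  have h2: "lin_comb C a b ds \<in> Hom C a b" using Cons.prems by auto
  show ?case using Cons p add_assoc[OF smul_in[OF f] h1 h2] by simp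
qed

lemma lc_add_coeff: "(\<And>i. i \<in> set xs \<Longrightarrow> F i \<in> Hom C a b) \<Longrightarrow>
  lin_comb C a b (map (\<lambda>i. (c i + d i, F i)) xs) =
  Add C (lin_comb C a b (map (\<lambda>i. (c i, F i)) xs)) (lin_comb C a b (map (\<lambda>i. (d i, F i)) xs))"
proof (induction xs)
  case Nil then show ?case by simp
next
  case (Cons y xs)
  have F: "F y \<in> Hom C a b" using Cons by simp
  have IH: "lin_comb C a b (map (\<lambda>i. (c i + d i, F i)) xs) =
  Add C (lin_comb C a b (map (\<lambda>i. (c i, F i)) xs)) (lin_comb C a b (map (\<lambda>i. (d i, F i)) xs))"
    using Cons by simp
  have L1: "lin_comb C a b (map (\<lambda>i. (c i, F i)) xs) \<in> Hom C a b"
    using Cons.prems by (intro lc_in) auto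
  have L2: "lin_comb C a b (map (\<lambda>i. (d i, F i)) xs) \<in> Hom C a b"
    using Cons.prems by (intro lc_in) auto
  let ?A = "lin_comb C a b (map (\<lambda>i. (c i, F i)) xs)"
  let ?B = "lin_comb C a b (map (\<lambda>i. (d i, F i)) xs)"
  have "lin_comb C a b (map (\<lambda>i. (c i + d i, F i)) (y#xs)) = Add C (Smul C (c y + d y) (F y)) (Add C ?A ?B)"
    using IH by simp
  also have "\<dots> = Add C (Add C (Smul C (c y) (F y)) (Smul C (d y) (F y))) (Add C ?A ?B)"
    using smul_add_scalar[OF F] by simp
  also have "\<dots> = Add C (Add C (Smul C (c y) (F y)) ?A) (Add C (Smul C (d y) (F y)) ?B)"
  proof -
    have s1: "Smul C (c y) (F y) \<in> Hom C a b" and s2: "Smul C (d y) (F y) \<in> Hom C a b" using F by auto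
    have "Add C (Add C (Smul C (c y) (F y)) (Smul C (d y) (F y))) (Add C ?A ?B)
       = Add C (Smul C (c y) (F y)) (Add C (Smul C (d y) (F y)) (Add C ?A ?B))"
      using add_assoc[OF s1 s2 add_in[OF L1 L2]] .
    also have "\<dots> = Add C (Smul C (c y) (F y)) (Add C ?A (Add C (Smul C (d y) (F y)) ?B))"
      using add_swap[OF s2 L1 L2] by simp
    also have "\<dots> = Add C (Add C (Smul C (c y) (F y)) ?A) (Add C (Smul C (d y) (F y)) ?B)"
      using add_assoc[OF s1 L1 add_in[OF s2 L2]] by simp
    finally show ?thesis .
  qed
  finally show ?case by (simp only: list.map lc_Cons)
qed

lemma lc_smul_coeff: "(\<And>i. i \<in> set xs \<Longrightarrow> F i \<in> Hom C a b) \<Longrightarrow>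
  lin_comb C a b (map (\<lambda>i. (r * c i, F i)) xs) = Smul C r (lin_comb C a b (map (\<lambda>i. (c i, F i)) xs))"
proof (induction xs)
  case Nil then show ?case by simp
next
  case (Cons y xs)
  have F: "F y \<in> Hom C a b" using Cons by simp
  have L1: "lin_comb C a b (map (\<lambda>i. (c i, F i)) xs) \<in> Hom C a b"
    using Cons.prems by (intro lc_in) auto
  have IH: "lin_comb C a b (map (\<lambda>i. (r * c i, F i)) xs) = Smul C r (lin_comb C a b (map (\<lambda>i. (c i, F i)) xs))"
    using Cons by simp
  have "lin_comb C a b (map (\<lambda>i. (r * c i, F i)) (y#xs)) = Add C (Smul C (r * c y) (F y)) (lin_comb C a b (map (\<lambda>i. (r * c i, F i)) xs))"
    by simp
  also have "\<dots> = Add C (Smul C r (Smul C (c y) (F y))) (Smul C r (lin_comb C a b (map (\<lambda>i. (c i, F i)) xs)))"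
    by (simp only: IH smul_smul[OF F])
  also have "\<dots> = Smul C r (Add C (Smul C (c y) (F y)) (lin_comb C a b (map (\<lambda>i. (c i, F i)) xs)))"
    using smul_add[OF smul_in[OF F] L1] by simp
  finally show ?case by (simp only: list.map lc_Cons)
qed

lemma lc_zero_coeff: "(\<And>i. i \<in> set xs \<Longrightarrow> F i \<in> Hom C a b) \<Longrightarrow>
  (\<And>i. i \<in> set xs \<Longrightarrow> c i = 0) \<Longrightarrow> lin_comb C a b (map (\<lambda>i. (c i, F i)) xs) = Zero C a b"
  by (induction xs) (auto simp add: smul_zero_scalar[of _ a b])

lemma lc_comp_left: "g \<in> Hom C b d \<Longrightarrow> snd ` set cs \<subseteq> Hom C a b \<Longrightarrow>
  Comp C g (lin_comb C a b cs) = lin_comb C a d (map (\<lambda>(c,f). (c, Comp C g f)) cs)"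
proof (induction cs)
  case Nil then show ?case by (simp add: comp_zero_right)
next
  case (Cons p cs)
  obtain c f where p: "p = (c,f)" by (cases p)
  have f: "f \<in> Hom C a b" using Cons.prems p by auto
  have h1: "lin_comb C a b cs \<in> Hom C a b" using Cons.prems by auto
  show ?case using Cons p f h1 by (simp add: comp_add_right[where a=a and b=b and c=d] comp_smul_right[where a=a and b=b and c=d])
qed

lemma lc_delta: "distinct xs \<Longrightarrow> (\<And>i. i \<in> set xs \<Longrightarrow> F i \<in> Hom C a b) \<Longrightarrow>
  lin_comb C a b (map (\<lambda>i. (if i = j then c else 0, F i)) xs) = (if j \<in> set xs then Smul C c (F j) else Zero C a b)"
proof (induction xs)
  case Nil then show ?case by simp
next
  case (Cons y xs)
  let ?L = "lin_comb C a b (map (\<lambda>i. (if i = j then c else 0, F i)) xs)"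
  have Lin: "?L \<in> Hom C a b" using Cons.prems by (intro lc_in) auto
  have Fy: "F y \<in> Hom C a b" using Cons.prems by auto
  show ?case
  proof (cases "y = j")
    case True
    then have L0: "?L = Zero C a b"
      using Cons.prems by (intro lc_zero_coeff) auto
    have "lin_comb C a b (map (\<lambda>i. (if i = j then c else 0, F i)) (y#xs)) = Add C (Smul C c (F y)) ?L"
      using True by simp
    also have "\<dots> = Smul C c (F y)" using L0 add_zero[OF smul_in[OF Fy]] by simp
    finally show ?thesis using True by simp
  next
    case False
    have IH: "?L = (if j \<in> set xs then Smul C c (F j) else Zero C a b)"
      using Cons.IH Cons.prems by auto
    have "lin_comb C a b (map (\<lambda>i. (if i = j then c else 0, F i)) (y#xs)) = Add C (Smul C 0 (F y)) ?L"
      using False by simp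
    also have "\<dots> = ?L" using smul_zero_scalar[OF Fy] zero_add[OF Lin] by simp
    finally show ?thesis using IH False by simp
  qed
qed

end

locale nbm = fixes C :: "('o,'m,'k::field) kcat" and t :: nat
  and Bo :: "'o \<Rightarrow> 'o" and Bm :: "'m \<Rightarrow> 'm" and x tau cap cup :: "'o \<Rightarrow> 'm" and L :: 'o
  assumes mod: "NB_module C t Bo Bm x tau cap cup" and spec: "special C Bo L"

sublocale nbm \<subseteq> kc C
  using mod unfolding NB_module_def kc_def by simp

context nbm begin

lemmas M = mod[unfolded NB_module_def]
lemmas M_obj = M[THEN conjunct2, THEN conjunct2, THEN conjunct1, rule_format]
lemmas M_nat = M[THEN conjunct2, THEN conjunct2, THEN conjunct2, THEN conjunct1, rule_format]
lemmas M_rel = M[THEN conjunct2, THEN conjunct2, THEN conjunct2, THEN conjunct2, rule_format]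

lemma kfun: "klin_endofunctor C Bo Bm" using M by blast
lemmas KF = kfun[unfolded klin_endofunctor_def]

lemma Bm_in[intro]: "f \<in> Hom C a b \<Longrightarrow> Bm f \<in> Hom C (Bo a) (Bo b)"
  using KF[THEN conjunct1, rule_format] by blast
lemma Bm_id[simp]: "Bm (kcat.Id C a) = kcat.Id C (Bo a)"
  using KF[THEN conjunct2, THEN conjunct1, rule_format] by blast
lemma Bm_comp: "f \<in> Hom C a b \<Longrightarrow> g \<in> Hom C b c \<Longrightarrow> Bm (Comp C g f) = Comp C (Bm g) (Bm f)"
  using KF[THEN conjunct2, THEN conjunct2, THEN conjunct1, rule_format] by blast
lemma Bm_add: "f \<in> Hom C a b \<Longrightarrow> g \<in> Hom C a b \<Longrightarrow> Bm (Add C f g) = Add C (Bm f) (Bm g)"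
  using KF[THEN conjunct2, THEN conjunct2, THEN conjunct2, THEN conjunct1, rule_format] by blast
lemma Bm_smul: "f \<in> Hom C a b \<Longrightarrow> Bm (Smul C k f) = Smul C k (Bm f)"
  using KF[THEN conjunct2, THEN conjunct2, THEN conjunct2, THEN conjunct2, rule_format] by blast
lemma Bm_zero[simp]: "Bm (Zero C a b) = Zero C (Bo a) (Bo b)"
proof -
  have "Bm (Zero C a b) = Bm (Smul C 0 (Zero C a b))" using smul_zero_scalar[OF zero_in, of a b] by simp
  also have "\<dots> = Smul C 0 (Bm (Zero C a b))" using Bm_smul[OF zero_in] by simp
  also have "\<dots> = Zero C (Bo a) (Bo b)" using smul_zero_scalar[OF Bm_in[OF zero_in[of a b]]] by simp
  finally show ?thesis .
qed

lemma x_in[simp,intro]: "x a \<in> Hom C (Bo a) (Bo a)" using M_obj[of a] by blast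
lemma tau_in[simp,intro]: "tau a \<in> Hom C (Bo (Bo a)) (Bo (Bo a))" using M_obj[of a] by blast
lemma cap_in[simp,intro]: "cap a \<in> Hom C (Bo (Bo a)) a" using M_obj[of a] by blast
lemma cup_in[simp,intro]: "cup a \<in> Hom C a (Bo (Bo a))" using M_obj[of a] by blast

lemma nat_x: "f \<in> Hom C a b \<Longrightarrow> Comp C (x b) (Bm f) = Comp C (Bm f) (x a)"
  using M_nat by blast
lemma nat_tau: "f \<in> Hom C a b \<Longrightarrow> Comp C (tau b) (Bm (Bm f)) = Comp C (Bm (Bm f)) (tau a)"
  using M_nat by blast
lemma nat_cap: "f \<in> Hom C a b \<Longrightarrow> Comp C (cap b) (Bm (Bm f)) = Comp C f (cap a)"
  using M_nat by blast
lemma nat_cup: "f \<in> Hom C a b \<Longrightarrow> Comp C (cup b) f = Comp C (Bm (Bm f)) (cup a)"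
  using M_nat by blast

lemma rel_tt: "Comp C (tau a) (tau a) = Zero C (Bo (Bo a)) (Bo (Bo a))"
  using M_rel[of a] by blast
lemma rel_capcup: "Comp C (cap a) (cup a) = Smul C (of_nat t) (kcat.Id C a)"
  using M_rel[of a] by blast
lemma zz1: "Comp C (cap (Bo a)) (Bm (cup a)) = kcat.Id C (Bo a)"
  using M_rel[of a] by blast
lemma zz2: "Comp C (Bm (cap a)) (cup (Bo a)) = kcat.Id C (Bo a)"
  using M_rel[of a] by blast
lemma cap_tau: "Comp C (cap a) (tau a) = Zero C (Bo (Bo a)) a"
  using M_rel[of a] by blast
lemma rot: "Comp C (Bm (cap a)) (tau (Bo a)) = Comp C (cap (Bo a)) (Bm (tau a))"
  using M_rel[of a] by blast
lemma dotslide: "Sub C (Comp C (x (Bo a)) (tau a)) (Comp C (tau a) (Bm (x a)))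
          = Sub C (kcat.Id C (Bo (Bo a))) (Comp C (cup a) (cap a))"
  using M_rel[of a] by blast
lemma capdot: "Comp C (cap a) (Bm (x a)) = Smul C (-1) (Comp C (cap a) (x (Bo a)))"
  using M_rel[of a] by blast

lemma spec_hom: "Hom C L L = range (\<lambda>c. Smul C c (kcat.Id C L))"
  using spec unfolding special_def by simp
lemma spec_inj: "inj (\<lambda>c. Smul C c (kcat.Id C L))"
  using spec unfolding special_def by simp
lemma spec_fd: "fin_dim_hom C (Bo L) (Bo L)"
  using spec unfolding special_def by simp

lemma mate_recover: assumes g: "g \<in> Hom C a (Bo (Bo a))"
  shows "Comp C (Bm (Comp C (cap (Bo a)) (Bm g))) (cup a) = g"
proof -
  have Bg: "Bm g \<in> Hom C (Bo a) (Bo (Bo (Bo a)))" using g by auto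
  have BBg: "Bm (Bm g) \<in> Hom C (Bo (Bo a)) (Bo (Bo (Bo (Bo a))))" using Bg by auto
  have Bcap: "Bm (cap (Bo a)) \<in> Hom C (Bo (Bo (Bo (Bo a)))) (Bo (Bo a))" by auto
  have "Comp C (Bm (Comp C (cap (Bo a)) (Bm g))) (cup a) = Comp C (Comp C (Bm (cap (Bo a))) (Bm (Bm g))) (cup a)"
    using Bm_comp[OF Bg cap_in] by simp
  also have "\<dots> = Comp C (Bm (cap (Bo a))) (Comp C (Bm (Bm g)) (cup a))"
    using comp_assoc[OF cup_in BBg Bcap] by simp
  also have "\<dots> = Comp C (Bm (cap (Bo a))) (Comp C (cup (Bo (Bo a))) g)"
    using nat_cup[OF g] by simp
  also have "\<dots> = Comp C (Comp C (Bm (cap (Bo a))) (cup (Bo (Bo a)))) g"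
    using comp_assoc[OF g cup_in Bcap] by simp
  also have "\<dots> = g" using zz2[of "Bo a"] id_left[OF g] by simp
  finally show ?thesis .
qed

lemma mate_inj: assumes g: "g \<in> Hom C a (Bo (Bo a))" and g': "g' \<in> Hom C a (Bo (Bo a))"
  and eq: "Comp C (cap (Bo a)) (Bm g) = Comp C (cap (Bo a)) (Bm g')"
  shows "g = g'"
proof -
  have "g = Comp C (Bm (Comp C (cap (Bo a)) (Bm g))) (cup a)" using mate_recover[OF g] by simp
  also have "\<dots> = Comp C (Bm (Comp C (cap (Bo a)) (Bm g'))) (cup a)" by (simp only: eq)
  also have "\<dots> = g'" using mate_recover[OF g'] by simp
  finally show ?thesis .
qed

end

context nbm begin

lemma dot_cup: "Comp C (x (Bo a)) (cup a) = Smul C (-1) (Comp C (Bm (x a)) (cup a))"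
proof (rule mate_inj)
  show g: "Comp C (x (Bo a)) (cup a) \<in> Hom C a (Bo (Bo a))" by auto
  have h2: "Comp C (Bm (x a)) (cup a) \<in> Hom C a (Bo (Bo a))" by auto
  then show "Smul C (-1) (Comp C (Bm (x a)) (cup a)) \<in> Hom C a (Bo (Bo a))" by auto
  have Bcup: "Bm (cup a) \<in> Hom C (Bo a) (Bo (Bo (Bo a)))" by auto
  have Bx: "Bm (x (Bo a)) \<in> Hom C (Bo (Bo (Bo a))) (Bo (Bo (Bo a)))" by auto
  have BBx: "Bm (Bm (x a)) \<in> Hom C (Bo (Bo (Bo a))) (Bo (Bo (Bo a)))" by auto
  have "Comp C (cap (Bo a)) (Bm (Comp C (x (Bo a)) (cup a)))
      = Comp C (cap (Bo a)) (Comp C (Bm (x (Bo a))) (Bm (cup a)))"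
    using Bm_comp[OF cup_in x_in] by simp
  also have "\<dots> = Comp C (Comp C (cap (Bo a)) (Bm (x (Bo a)))) (Bm (cup a))"
    using comp_assoc[OF Bcup Bx cap_in] by simp
  also have "\<dots> = Comp C (Smul C (-1) (Comp C (cap (Bo a)) (x (Bo (Bo a))))) (Bm (cup a))"
    using capdot[of "Bo a"] by simp
  also have "\<dots> = Smul C (-1) (Comp C (Comp C (cap (Bo a)) (x (Bo (Bo a)))) (Bm (cup a)))"
    using comp_smul_left[OF Bcup comp_in[OF x_in cap_in]] by simp
  also have "\<dots> = Smul C (-1) (Comp C (cap (Bo a)) (Comp C (x (Bo (Bo a))) (Bm (cup a))))"
    using comp_assoc[OF Bcup x_in cap_in] by simp
  also have "\<dots> = Smul C (-1) (Comp C (cap (Bo a)) (Comp C (Bm (cup a)) (x a)))"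
    using nat_x[OF cup_in[of a]] by simp
  also have "\<dots> = Smul C (-1) (Comp C (Comp C (cap (Bo a)) (Bm (cup a))) (x a))"
    using comp_assoc[OF x_in Bcup cap_in] by simp
  also have "\<dots> = Smul C (-1) (x a)"
    using zz1[of a] id_left[OF x_in] by simp
  finally have l: "Comp C (cap (Bo a)) (Bm (Comp C (x (Bo a)) (cup a))) = Smul C (-1) (x a)" .
  have "Comp C (cap (Bo a)) (Bm (Smul C (-1) (Comp C (Bm (x a)) (cup a))))
      = Comp C (cap (Bo a)) (Smul C (-1) (Bm (Comp C (Bm (x a)) (cup a))))"
    using Bm_smul[OF h2] by simp
  also have "\<dots> = Smul C (-1) (Comp C (cap (Bo a)) (Bm (Comp C (Bm (x a)) (cup a))))"
    using comp_smul_right[OF Bm_in[OF h2] cap_in] by simp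
  also have "\<dots> = Smul C (-1) (Comp C (cap (Bo a)) (Comp C (Bm (Bm (x a))) (Bm (cup a))))"
    using Bm_comp[OF cup_in Bm_in[OF x_in]] by simp
  also have "\<dots> = Smul C (-1) (Comp C (Comp C (cap (Bo a)) (Bm (Bm (x a)))) (Bm (cup a)))"
    using comp_assoc[OF Bcup BBx cap_in] by simp
  also have "\<dots> = Smul C (-1) (Comp C (Comp C (x a) (cap (Bo a))) (Bm (cup a)))"
    using nat_cap[OF x_in[of a]] by simp
  also have "\<dots> = Smul C (-1) (Comp C (x a) (Comp C (cap (Bo a)) (Bm (cup a))))"
    using comp_assoc[OF Bcup cap_in x_in] by simp
  also have "\<dots> = Smul C (-1) (x a)"
    using zz1[of a] id_right[OF x_in] by simp
  finally show "Comp C (cap (Bo a)) (Bm (Comp C (x (Bo a)) (cup a))) =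
    Comp C (cap (Bo a)) (Bm (Smul C (-1) (Comp C (Bm (x a)) (cup a))))" using l by simp
qed

lemma tau_cup_aux: "Comp C (tau (Bo a)) (Bm (cup a)) = Comp C (Bm (tau a)) (cup (Bo a))"
proof (rule mate_inj)
  show "Comp C (tau (Bo a)) (Bm (cup a)) \<in> Hom C (Bo a) (Bo (Bo (Bo a)))" by auto
  show "Comp C (Bm (tau a)) (cup (Bo a)) \<in> Hom C (Bo a) (Bo (Bo (Bo a)))" by auto
  have Bcup: "Bm (cup a) \<in> Hom C (Bo a) (Bo (Bo (Bo a)))" by auto
  have BBcup: "Bm (Bm (cup a)) \<in> Hom C (Bo (Bo a)) (Bo (Bo (Bo (Bo a))))" by auto
  have Bt: "Bm (tau (Bo a)) \<in> Hom C (Bo (Bo (Bo (Bo a)))) (Bo (Bo (Bo (Bo a))))" by auto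
  have BBt: "Bm (Bm (tau a)) \<in> Hom C (Bo (Bo (Bo (Bo a)))) (Bo (Bo (Bo (Bo a))))" by auto
  have Bcap: "Bm (cap (Bo a)) \<in> Hom C (Bo (Bo (Bo (Bo a)))) (Bo (Bo a))" by auto
  have Bcup2: "Bm (cup (Bo a)) \<in> Hom C (Bo (Bo a)) (Bo (Bo (Bo (Bo a))))" by auto
  have "Comp C (cap (Bo (Bo a))) (Bm (Comp C (tau (Bo a)) (Bm (cup a))))
     = Comp C (cap (Bo (Bo a))) (Comp C (Bm (tau (Bo a))) (Bm (Bm (cup a))))"
    using Bm_comp[OF Bcup tau_in] by simp
  also have "\<dots> = Comp C (Comp C (cap (Bo (Bo a))) (Bm (tau (Bo a)))) (Bm (Bm (cup a)))"
    using comp_assoc[OF BBcup Bt cap_in] by simp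
  also have "\<dots> = Comp C (Comp C (Bm (cap (Bo a))) (tau (Bo (Bo a)))) (Bm (Bm (cup a)))"
    using rot[of "Bo a"] by simp
  also have "\<dots> = Comp C (Bm (cap (Bo a))) (Comp C (tau (Bo (Bo a))) (Bm (Bm (cup a))))"
    using comp_assoc[OF BBcup tau_in Bcap] by simp
  also have "\<dots> = Comp C (Bm (cap (Bo a))) (Comp C (Bm (Bm (cup a))) (tau a))"
    using nat_tau[OF cup_in[of a]] by simp
  also have "\<dots> = Comp C (Comp C (Bm (cap (Bo a))) (Bm (Bm (cup a)))) (tau a)"
    using comp_assoc[OF tau_in BBcup Bcap] by simp
  also have "\<dots> = Comp C (Bm (Comp C (cap (Bo a)) (Bm (cup a)))) (tau a)"
    using Bm_comp[OF Bcup cap_in] by simp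
  also have "\<dots> = tau a"
    using zz1[of a] id_left[OF tau_in] by simp
  finally have l: "Comp C (cap (Bo (Bo a))) (Bm (Comp C (tau (Bo a)) (Bm (cup a)))) = tau a" .
  have "Comp C (cap (Bo (Bo a))) (Bm (Comp C (Bm (tau a)) (cup (Bo a))))
     = Comp C (cap (Bo (Bo a))) (Comp C (Bm (Bm (tau a))) (Bm (cup (Bo a))))"
    using Bm_comp[OF cup_in Bm_in[OF tau_in]] by simp
  also have "\<dots> = Comp C (Comp C (cap (Bo (Bo a))) (Bm (Bm (tau a)))) (Bm (cup (Bo a)))"
    using comp_assoc[OF Bcup2 BBt cap_in] by simp
  also have "\<dots> = Comp C (Comp C (tau a) (cap (Bo (Bo a)))) (Bm (cup (Bo a)))"
    using nat_cap[OF tau_in[of a]] by simp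
  also have "\<dots> = Comp C (tau a) (Comp C (cap (Bo (Bo a))) (Bm (cup (Bo a))))"
    using comp_assoc[OF Bcup2 cap_in tau_in] by simp
  also have "\<dots> = tau a"
    using zz1[of "Bo a"] id_right[OF tau_in] by simp
  finally show "Comp C (cap (Bo (Bo a))) (Bm (Comp C (tau (Bo a)) (Bm (cup a)))) =
    Comp C (cap (Bo (Bo a))) (Bm (Comp C (Bm (tau a)) (cup (Bo a))))" using l by simp
qed

lemma tau_cup: "Comp C (tau a) (cup a) = Zero C a (Bo (Bo a))"
proof (rule mate_inj)
  show "Comp C (tau a) (cup a) \<in> Hom C a (Bo (Bo a))" by auto
  show "Zero C a (Bo (Bo a)) \<in> Hom C a (Bo (Bo a))" by auto
  have Bcup: "Bm (cup a) \<in> Hom C (Bo a) (Bo (Bo (Bo a)))" by auto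
  have Bt: "Bm (tau a) \<in> Hom C (Bo (Bo (Bo a))) (Bo (Bo (Bo a)))" by auto
  have Bcap: "Bm (cap a) \<in> Hom C (Bo (Bo (Bo a))) (Bo a)" by auto
  have "Comp C (cap (Bo a)) (Bm (Comp C (tau a) (cup a)))
      = Comp C (cap (Bo a)) (Comp C (Bm (tau a)) (Bm (cup a)))"
    using Bm_comp[OF cup_in tau_in] by simp
  also have "\<dots> = Comp C (Comp C (cap (Bo a)) (Bm (tau a))) (Bm (cup a))"
    using comp_assoc[OF Bcup Bt cap_in] by simp
  also have "\<dots> = Comp C (Comp C (Bm (cap a)) (tau (Bo a))) (Bm (cup a))"
    using rot[of a] by simp
  also have "\<dots> = Comp C (Bm (cap a)) (Comp C (tau (Bo a)) (Bm (cup a)))"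
    using comp_assoc[OF Bcup tau_in Bcap] by simp
  also have "\<dots> = Comp C (Bm (cap a)) (Comp C (Bm (tau a)) (cup (Bo a)))"
    using tau_cup_aux[of a] by simp
  also have "\<dots> = Comp C (Comp C (Bm (cap a)) (Bm (tau a))) (cup (Bo a))"
    using comp_assoc[OF cup_in Bt Bcap] by simp
  also have "\<dots> = Comp C (Bm (Comp C (cap a) (tau a))) (cup (Bo a))"
    using Bm_comp[OF tau_in cap_in] by simp
  also have "\<dots> = Zero C (Bo a) (Bo a)"
    using cap_tau[of a] comp_zero_left[OF cup_in] by simp
  finally have l: "Comp C (cap (Bo a)) (Bm (Comp C (tau a) (cup a))) = Zero C (Bo a) (Bo a)" .
  have "Comp C (cap (Bo a)) (Bm (Zero C a (Bo (Bo a)))) = Zero C (Bo a) (Bo a)"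
    using comp_zero_right[OF cap_in] by simp
  then show "Comp C (cap (Bo a)) (Bm (Comp C (tau a) (cup a))) =
    Comp C (cap (Bo a)) (Bm (Zero C a (Bo (Bo a))))" using l by simp
qed

end

context nbm begin

abbreviation "XX \<equiv> x L"
abbreviation "BL \<equiv> Bo L"

lemma mpow_0[simp]: "mpow C a f 0 = kcat.Id C a" unfolding mpow_def by simp
lemma mpow_Suc: "mpow C a f (Suc n) = Comp C f (mpow C a f n)" unfolding mpow_def by simp

lemma mpow_in[simp,intro]: "f \<in> Hom C a a \<Longrightarrow> mpow C a f n \<in> Hom C a a"
  by (induction n) (auto simp add: mpow_Suc)

definition ev :: "'k poly \<Rightarrow> 'm" where "ev p = poly_eval C BL p XX"

definition evn :: "nat \<Rightarrow> 'k poly \<Rightarrow> 'm" where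
  "evn n p = lin_comb C BL BL (map (\<lambda>i. (coeff p i, mpow C BL XX i)) [0..<n])"

lemma evn_in[simp,intro]: "evn n p \<in> Hom C BL BL"
  unfolding evn_def by (rule lc_in) auto

lemma ev_evn: "ev p = evn (Suc (degree p)) p"
  unfolding ev_def evn_def poly_eval_def by simp

lemma evn_Suc: "evn (Suc n) p = Add C (evn n p) (Smul C (coeff p n) (mpow C BL XX n))"
proof -
  have "evn (Suc n) p = Add C (evn n p) (lin_comb C BL BL [(coeff p n, mpow C BL XX n)])"
    unfolding evn_def by (simp only: upt_Suc_append[OF le0] map_append list.map, subst lc_append) auto
  also have "lin_comb C BL BL [(coeff p n, mpow C BL XX n)] = Smul C (coeff p n) (mpow C BL XX n)"
    using add_zero[OF smul_in[OF mpow_in[OF x_in]]] by simp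
  finally show ?thesis .
qed

lemma evn_ext: assumes "degree p < n" shows "evn n p = ev p"
  using assms
proof (induction n)
  case 0 then show ?case by simp
next
  case (Suc n)
  show ?case
  proof (cases "degree p < n")
    case True
    have "coeff p n = 0" using True coeff_eq_0 by blast
    then have "evn (Suc n) p = evn n p"
      using evn_Suc[of n p] smul_zero_scalar[OF mpow_in[OF x_in]] add_zero[OF evn_in] by simp
    then show ?thesis using Suc True by simp
  next
    case False
    then have "n = degree p" using Suc by simp
    then show ?thesis using ev_evn by simp
  qed
qed


lemma ev_in[simp,intro]: "ev p \<in> Hom C BL BL"
  using ev_evn evn_in by simp

lemma ev_add: "ev (p + q) = Add C (ev p) (ev q)"
proof -
  let ?N = "Suc (max (degree p) (degree q))"
  have d: "degree (p + q) < ?N" using degree_add_le_max[of p q] by simp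
  have "ev (p + q) = evn ?N (p + q)" using evn_ext[OF d] by simp
  also have "\<dots> = Add C (evn ?N p) (evn ?N q)"
    unfolding evn_def coeff_add by (rule lc_add_coeff) auto
  also have "\<dots> = Add C (ev p) (ev q)" using evn_ext[where p=p and n="?N"] evn_ext[where p=q and n="?N"] by simp
  finally show ?thesis .
qed

lemma ev_smult: "ev (smult c p) = Smul C c (ev p)"
proof -
  let ?N = "Suc (degree p)"
  have d: "degree (smult c p) < ?N" using degree_smult_le[of c p] by simp
  have "ev (smult c p) = evn ?N (smult c p)" using evn_ext[OF d] by simp
  also have "\<dots> = Smul C c (evn ?N p)"
    unfolding evn_def coeff_smult by (rule lc_smul_coeff) auto
  also have "\<dots> = Smul C c (ev p)" using evn_ext[where p=p and n="?N"] by simp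
  finally show ?thesis .
qed

lemma ev_0[simp]: "ev 0 = Zero C BL BL"
proof -
  have "ev 0 = evn 1 0" using ev_evn[of 0] by simp
  also have "\<dots> = Zero C BL BL" using evn_Suc[of 0 0] smul_zero_scalar[OF id_in] unfolding evn_def by (simp add: zero_add)
  finally show ?thesis .
qed

lemma ev_pCons: "ev (pCons a p) = Add C (Smul C a (kcat.Id C BL)) (Comp C XX (ev p))"
proof -
  let ?N = "Suc (degree p)"
  have d: "degree (pCons a p) < Suc ?N" by simp
  have ups: "[0..<Suc ?N] = 0 # map Suc [0..<?N]" by (simp only: map_Suc_upt upt_conv_Cons[of 0 "Suc ?N"] zero_less_Suc)
  have cm: "lin_comb C BL BL (map (\<lambda>i. (coeff p i, Comp C XX (mpow C BL XX i))) [0..<?N])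
     = Comp C XX (evn ?N p)"
  proof -
    have pr: "snd ` set (map (\<lambda>i. (coeff p i, mpow C BL XX i)) [0..<?N]) \<subseteq> Hom C BL BL" by auto
    show ?thesis
    unfolding evn_def using lc_comp_left[where g=XX and b=BL and d=BL and a=BL and cs="map (\<lambda>i. (coeff p i, mpow C BL XX i)) [0..<?N]", OF x_in pr]
    by (simp add: o_def del: upt_Suc)
  qed
  have "ev (pCons a p) = evn (Suc ?N) (pCons a p)" using evn_ext[OF d] by simp
  also have "\<dots> = Add C (Smul C a (kcat.Id C BL))
      (lin_comb C BL BL (map (\<lambda>i. (coeff p i, Comp C XX (mpow C BL XX i))) [0..<?N]))"
    unfolding evn_def ups by (simp add: mpow_Suc o_def)
  also have "\<dots> = Add C (Smul C a (kcat.Id C BL)) (Comp C XX (ev p))"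
    using cm evn_ext[where p=p and n="?N"] by simp
  finally show ?thesis .
qed

lemma ev_const: "ev [:c:] = Smul C c (kcat.Id C BL)"
  using ev_pCons[of c 0] comp_zero_right[OF x_in] add_zero[OF smul_in[OF id_in]] by simp

lemma ev_one: "ev 1 = kcat.Id C BL"
  using ev_const[of 1] smul_one[OF id_in] by (simp add: one_pCons)

lemma ev_x: "ev (pCons 0 p) = Comp C XX (ev p)"
  using ev_pCons[of 0 p] smul_zero_scalar[OF id_in] zero_add[OF comp_in[OF ev_in x_in]] by simp

lemma ev_xcomm: "Comp C (ev p) XX = Comp C XX (ev p)"
proof (induction p rule: pCons_induct)
  case 0 then show ?case using comp_zero_left[OF x_in] comp_zero_right[OF x_in] by simp
next
  case (pCons a p)
  have i1: "Smul C a (kcat.Id C BL) \<in> Hom C BL BL" by auto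
  have i2: "Comp C XX (ev p) \<in> Hom C BL BL" by auto
  have "Comp C (ev (pCons a p)) XX = Add C (Comp C (Smul C a (kcat.Id C BL)) XX) (Comp C (Comp C XX (ev p)) XX)"
    using ev_pCons comp_add_left[OF x_in i1 i2] by simp
  also have "\<dots> = Add C (Smul C a XX) (Comp C XX (Comp C (ev p) XX))"
    using comp_smul_left[OF x_in id_in] id_left[OF x_in] comp_assoc[OF x_in ev_in x_in] by simp
  also have "\<dots> = Add C (Comp C XX (Smul C a (kcat.Id C BL))) (Comp C XX (Comp C XX (ev p)))"
    using pCons.IH comp_smul_right[OF id_in x_in] id_right[OF x_in] by simp
  also have "\<dots> = Comp C XX (ev (pCons a p))"
    using ev_pCons comp_add_right[OF i1 i2 x_in] by simp
  finally show ?case .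
qed

lemma ev_mult_zero: assumes m: "ev m = Zero C BL BL" shows "ev (q * m) = Zero C BL BL"
proof (induction q rule: pCons_induct)
  case 0 then show ?case by simp
next
  case (pCons a q)
  have "ev (pCons a q * m) = Add C (ev (smult a m)) (ev (pCons 0 (q * m)))"
    using ev_add by simp
  also have "\<dots> = Zero C BL BL"
    using ev_smult[of a m] m ev_x[of "q * m"] pCons.IH comp_zero_right[OF x_in] by simp
  finally show ?case .
qed

end

context nbm begin

lemma ann_exists: "\<exists>p. p \<noteq> 0 \<and> ev p = Zero C BL BL"
proof -
  obtain S where S: "finite S" "S \<subseteq> Hom C BL BL"
    and Sp: "\<And>f. f \<in> Hom C BL BL \<Longrightarrow> \<exists>cs. set (map snd cs) \<subseteq> S \<and> f = lin_comb C BL BL cs"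
    using spec_fd unfolding fin_dim_hom_def by blast
  obtain ss where ss: "set ss = S" "distinct ss" using finite_distinct_list[OF S(1)] by blast
  define N where "N = length ss"
  have ssH: "\<And>j. j < N \<Longrightarrow> ss ! j \<in> Hom C BL BL" using ss S(2) unfolding N_def by auto
  define Phi where "Phi q = lin_comb C BL BL (map (\<lambda>j. (coeff q j, ss ! j)) [0..<N])" for q :: "'k poly"
  have Phi_in: "Phi q \<in> Hom C BL BL" for q unfolding Phi_def by (rule lc_in) (auto intro: ssH)
  have Phi_add: "Phi (p + q) = Add C (Phi p) (Phi q)" for p q
    unfolding Phi_def coeff_add by (rule lc_add_coeff) (auto intro: ssH)
  have Phi_smult: "Phi (smult c p) = Smul C c (Phi p)" for c p
    unfolding Phi_def coeff_smult by (rule lc_smul_coeff) (auto intro: ssH)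
  have Phi_0: "Phi 0 = Zero C BL BL" unfolding Phi_def by (rule lc_zero_coeff) (auto intro: ssH)
  have Phi_monom: "Phi (monom c j) = Smul C c (ss ! j)" if j: "j < N" for c j
  proof -
    have "Phi (monom c j) = lin_comb C BL BL (map (\<lambda>i. (if i = j then c else 0, ss ! i)) [0..<N])"
      unfolding Phi_def coeff_monom by (intro arg_cong[where f="lin_comb C BL BL"] map_cong) auto
    also have "\<dots> = Smul C c (ss ! j)" using lc_delta[of "[0..<N]" "\<lambda>i. ss ! i" BL BL j c] j ssH by simp
    finally show ?thesis .
  qed
  have rep: "\<exists>q\<in>PSn N. lin_comb C BL BL cs = Phi q" if "set (map snd cs) \<subseteq> S" for cs
    using that
  proof (induction cs)
    case Nil then show ?case using Phi_0 by (intro bexI[of _ 0]) (auto simp: PSn_def)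
  next
    case (Cons a cs)
    obtain c s where a: "a = (c, s)" by (cases a)
    then have "s \<in> S" using Cons.prems by simp
    then obtain j where j: "j < N" "s = ss ! j" using ss unfolding N_def by (auto simp: in_set_conv_nth)
    obtain q where q: "q \<in> PSn N" "lin_comb C BL BL cs = Phi q" using Cons by auto
    have "lin_comb C BL BL (a # cs) = Add C (Phi (monom c j)) (Phi q)" using a j q Phi_monom by simp
    also have "\<dots> = Phi (monom c j + q)" using Phi_add by simp
    finally have e: "lin_comb C BL BL (a # cs) = Phi (monom c j + q)" .
    have "monom c j + q \<in> PSn N" using q(1) j(1) unfolding PSn_def by (simp add: coeff_monom)
    then show ?case using e by blast
  qed
  have gex: "\<exists>g\<in>PSn N. mpow C BL XX i = Phi g" for i
  proof -
    obtain cs where "set (map snd cs) \<subseteq> S" "mpow C BL XX i = lin_comb C BL BL cs"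
      using Sp[OF mpow_in[OF x_in]] by blast
    then show ?thesis using rep by metis
  qed
  define g where "g i = (SOME q. q \<in> PSn N \<and> mpow C BL XX i = Phi q)" for i
  have g: "g i \<in> PSn N \<and> mpow C BL XX i = Phi (g i)" for i
    unfolding g_def using someI_ex[OF gex[of i, unfolded Bex_def]] .
  define Lam where "Lam p = (\<Sum>i<Suc N. smult (coeff p i) (g i))" for p :: "'k poly"
  have Lam_lin: "Vector_Spaces.linear smult smult Lam"
    by (rule lin_polyI) (simp_all add: Lam_def smult_add_left smult_add_right sum.distrib pv.scale_sum_right)
  interpret ll: Vector_Spaces.linear smult smult Lam by (rule Lam_lin)
  have Lam_PS: "Lam p \<in> PSn N" for p
    unfolding Lam_def PSn_def using g unfolding PSn_def by (simp add: coeff_sum)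
  have lcPhi: "lin_comb C BL BL (map (\<lambda>i. (c i, Phi (h i))) [0..<n]) = Phi (\<Sum>i<n. smult (c i) (h i))" for c h n
  proof (induction n)
    case 0 then show ?case using Phi_0 by simp
  next
    case (Suc n)
    have "lin_comb C BL BL (map (\<lambda>i. (c i, Phi (h i))) [0..<Suc n])
       = Add C (lin_comb C BL BL (map (\<lambda>i. (c i, Phi (h i))) [0..<n])) (lin_comb C BL BL [(c n, Phi (h n))])"
      by (simp only: upt_Suc_append[OF le0] map_append list.map, subst lc_append) (auto intro: Phi_in)
    also have "\<dots> = Add C (Phi (\<Sum>i<n. smult (c i) (h i))) (Phi (smult (c n) (h n)))"
      using Suc Phi_smult add_zero[OF smul_in[OF Phi_in]] by simp
    also have "\<dots> = Phi (\<Sum>i<Suc n. smult (c i) (h i))" using Phi_add by simp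
    finally show ?case .
  qed
  have PSspan: "pv.span (Mn n) = (PSn n :: 'k poly set)" for n
    using PSn_span[of n] pv.span_minimal[OF Mn_sub PSn_subspace] by blast
  have "\<exists>p\<in>PSn (Suc N). p \<noteq> 0 \<and> Lam p = 0"
  proof (rule ccontr)
    assume "\<not> ?thesis"
    then have "\<forall>x\<in>pv.span (Mn (Suc N)). Lam x = 0 \<longrightarrow> x = 0" using PSspan by auto
    then have inj: "inj_on Lam (pv.span (Mn (Suc N)))" using ll.inj_on_iff_eq_0[OF pv.subspace_span] by blast
    have ind: "pv.independent (Lam ` Mn (Suc N))" by (rule ll.independent_injective_image[OF Mn_indep inj])
    have cd: "card (Lam ` Mn (Suc N)) = Suc N"
      using card_image[OF inj_on_subset[OF inj pv.span_superset]] Mn_card by simp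
    have "Lam ` Mn (Suc N) \<subseteq> pv.span (Mn N)" using Lam_PS PSspan by auto
    then have "card (Lam ` Mn (Suc N)) \<le> card (Mn N :: 'k poly set)"
      using pv.independent_span_bound[OF Mn_finite ind] by auto
    then show False using cd Mn_card[of N, where 'a='k] by simp
  qed
  then obtain p where p: "p \<in> PSn (Suc N)" "p \<noteq> 0" "Lam p = 0" by blast
  have dp: "degree p < Suc N"
  proof (rule ccontr)
    assume "\<not> degree p < Suc N"
    then have "coeff p (degree p) = 0" using p(1) unfolding PSn_def by simp
    then show False using p(2) by simp
  qed
  have "ev p = evn (Suc N) p" using evn_ext[OF dp] by simp
  also have "\<dots> = lin_comb C BL BL (map (\<lambda>i. (coeff p i, Phi (g i))) [0..<Suc N])"
    unfolding evn_def using g by simp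
  also have "\<dots> = Phi (Lam p)" unfolding Lam_def by (rule lcPhi)
  also have "\<dots> = Zero C BL BL" using p(3) Phi_0 by simp
  finally show ?thesis using p(2) by blast
qed


lemma ev_sub: "ev (p - q) = Add C (ev p) (Smul C (-1) (ev q))"
proof -
  have "p - q = p + smult (-1) q" by simp
  then have "ev (p - q) = ev (p + smult (-1) q)" by simp
  also have "\<dots> = Add C (ev p) (Smul C (-1) (ev q))" by (simp only: ev_add ev_smult)
  finally show ?thesis .
qed

lemma ev_eq_sub: "ev p = ev q \<Longrightarrow> ev (p - q) = Zero C BL BL"
  using ev_sub add_neg[OF ev_in] by simp

lemma normalize_ann: assumes "p \<noteq> 0" "ev p = Zero C BL BL"
  shows "lead_coeff (smult (inverse (lead_coeff p)) p) = 1 \<and> ev (smult (inverse (lead_coeff p)) p) = Zero C BL BL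
     \<and> degree (smult (inverse (lead_coeff p)) p) = degree p"
  using assms ev_smult by (simp add: field_simps)

lemma pe_ev: "poly_eval C BL q XX = ev q" unfolding ev_def by simp

definition dmin :: nat where
  "dmin = (LEAST n. \<exists>p. lead_coeff p = 1 \<and> ev p = Zero C BL BL \<and> degree p = n)"

lemma dmin_ex: "\<exists>p. lead_coeff p = 1 \<and> ev p = Zero C BL BL \<and> degree p = dmin"
proof -
  obtain p where "p \<noteq> 0" "ev p = Zero C BL BL" using ann_exists by blast
  then have "\<exists>n p. lead_coeff p = 1 \<and> ev p = Zero C BL BL \<and> degree p = n"
    using normalize_ann by blast
  then show ?thesis unfolding dmin_def by (rule LeastI_ex)
qed

lemma dmin_le: "lead_coeff p = 1 \<Longrightarrow> ev p = Zero C BL BL \<Longrightarrow> dmin \<le> degree p"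
  unfolding dmin_def by (rule Least_le) blast

lemma ann_deg: assumes "p \<noteq> 0" "ev p = Zero C BL BL" shows "dmin \<le> degree p"
proof -
  let ?n = "smult (inverse (lead_coeff p)) p"
  have n: "lead_coeff ?n = 1" "ev ?n = Zero C BL BL" "degree ?n = degree p" using normalize_ann[OF assms] by auto
  show ?thesis using dmin_le[OF n(1) n(2)] n(3) by simp
qed

lemma monic_diff_deg: assumes "lead_coeff p = (1::'k)" "lead_coeff q = 1" "degree p = degree q" "p \<noteq> q"
  shows "degree (p - q) < degree p"
proof -
  have "degree (p - q) \<le> degree p" using degree_diff_le_max[of p q] assms by simp
  moreover have "coeff (p - q) (degree p) = 0" using assms by simp
  moreover have "p - q \<noteq> 0" using assms by simp
  ultimately show ?thesis by (metis le_neq_implies_less leading_coeff_0_iff)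
qed

lemma min_poly_unique: assumes "is_min_poly C BL XX q" obtains p where "lead_coeff p = 1" "ev p = Zero C BL BL" "degree p = dmin" "q = p"
proof -
  obtain p where p: "lead_coeff p = 1" "ev p = Zero C BL BL" "degree p = dmin" using dmin_ex by blast
  have q1: "lead_coeff q = 1" "ev q = Zero C BL BL" using assms unfolding is_min_poly_def pe_ev by auto
  have "degree q \<le> degree p" using assms p unfolding is_min_poly_def pe_ev by blast
  moreover have "dmin \<le> degree q" using dmin_le q1 by simp
  ultimately have dq: "degree q = degree p" using p by simp
  have "q = p"
  proof (rule ccontr)
    assume ne: "q \<noteq> p"
    have "degree (q - p) < degree q" using monic_diff_deg[OF q1(1) p(1) dq ne] .
    moreover have "ev (q - p) = Zero C BL BL" using ev_eq_sub q1 p by simp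
    moreover have "q - p \<noteq> 0" using ne by simp
    ultimately show False using ann_deg[of "q - p"] dq p by simp
  qed
  then show ?thesis using that p by blast
qed

definition mp :: "'k poly" where "mp = min_poly C BL XX"

lemma mp_props: "lead_coeff mp = 1" "ev mp = Zero C BL BL" "degree mp = dmin"
proof -
  obtain p where p: "lead_coeff p = 1" "ev p = Zero C BL BL" "degree p = dmin" using dmin_ex by blast
  have isp: "is_min_poly C BL XX p" unfolding is_min_poly_def pe_ev using p dmin_le by simp
  have "mp = p" unfolding mp_def min_poly_def
  proof (rule the_equality)
    show "is_min_poly C BL XX p" by (rule isp)
    fix q assume "is_min_poly C BL XX q"
    then obtain p' where pp: "lead_coeff p' = 1" "ev p' = Zero C BL BL" "degree p' = dmin" "q = p'"
      by (rule min_poly_unique)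
    moreover have "p' = p"
    proof (rule ccontr)
      assume ne: "p' \<noteq> p"
      have "degree (p' - p) < degree p'" using monic_diff_deg[of p' p] pp p ne by simp
      moreover have "ev (p' - p) = Zero C BL BL" using ev_eq_sub[of p' p] pp p by simp
      moreover have "p' - p \<noteq> 0" using ne by simp
      ultimately show False using ann_deg[of "p' - p"] \<open>degree p' = dmin\<close> by simp
    qed
    ultimately show "q = p" by simp
  qed
  then show "lead_coeff mp = 1" "ev mp = Zero C BL BL" "degree mp = dmin" using p by auto
qed

lemma mp_nz: "mp \<noteq> 0" using mp_props(1) by auto

lemma ev_zero_iff: "ev p = Zero C BL BL \<longleftrightarrow> mp dvd p"
proof
  assume "mp dvd p"
  then obtain k where "p = mp * k" by (elim dvdE)
  then have "p = k * mp" by (simp add: mult.commute)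
  then show "ev p = Zero C BL BL" using ev_mult_zero[OF mp_props(2)] by simp
next
  assume e: "ev p = Zero C BL BL"
  let ?r = "p mod mp"
  have pr: "p = (p div mp) * mp + ?r" by simp
  have "ev p = ev ((p div mp) * mp + ?r)" using pr by simp
  also have "\<dots> = Add C (ev ((p div mp) * mp)) (ev ?r)" by (rule ev_add)
  finally have "ev p = Add C (ev ((p div mp) * mp)) (ev ?r)" .
  then have "ev ?r = Zero C BL BL" using e ev_mult_zero[OF mp_props(2)] zero_add[OF ev_in] by simp
  moreover have "?r \<noteq> 0 \<Longrightarrow> degree ?r < degree mp" using degree_mod_less'[OF mp_nz] by blast
  ultimately have "?r = 0" using ann_deg[of ?r] mp_props(3) by force
  then show "mp dvd p" by (simp add: mod_eq_0_iff_dvd)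
qed

end

context kc begin
lemma solve_neg: assumes A: "A \<in> Hom C a b" and Y: "Y \<in> Hom C a b" and B: "B \<in> Hom C a b"
  and eq: "Add C A (Smul C (-1) Y) = B" shows "Y = Add C A (Smul C (-1) B)"
proof -
  have nA: "Smul C (-1) A \<in> Hom C a b" using A by auto
  have "Add C A (Smul C (-1) B) = Add C A (Smul C (-1) (Add C A (Smul C (-1) Y)))" using eq by simp
  also have "\<dots> = Add C A (Add C (Smul C (-1) A) (Smul C (-1) (Smul C (-1) Y)))"
    using smul_add[OF A smul_in[OF Y]] by simp
  also have "\<dots> = Add C A (Add C (Smul C (-1) A) Y)"
    using smul_smul[OF Y, of "-1" "-1"] smul_one[OF Y] by simp
  also have "\<dots> = Add C (Add C A (Smul C (-1) A)) Y"
    using add_assoc[OF A nA Y] by simp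
  also have "\<dots> = Y" using add_neg[OF A] zero_add[OF Y] by simp
  finally show ?thesis by simp
qed
end

context nbm begin

abbreviation "BBL \<equiv> Bo (Bo L)"

lemma key_v: assumes v: "v \<in> Hom C c BBL"
  shows "Add C (Comp C (x BL) (Comp C (tau L) v)) (Smul C (-1) (Comp C (tau L) (Comp C (Bm XX) v)))
       = Add C v (Smul C (-1) (Comp C (cup L) (Comp C (cap L) v)))"
proof -
  let ?P = "Comp C (x BL) (tau L)" and ?Q = "Comp C (tau L) (Bm XX)" and ?R = "Comp C (cup L) (cap L)"
  have P: "?P \<in> Hom C BBL BBL" and Q: "?Q \<in> Hom C BBL BBL" and R: "?R \<in> Hom C BBL BBL" by auto
  have "Comp C (Sub C ?P ?Q) v = Comp C (Sub C (kcat.Id C BBL) ?R) v" using dotslide[of L] by simp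
  moreover have "Comp C (Sub C ?P ?Q) v = Add C (Comp C (x BL) (Comp C (tau L) v)) (Smul C (-1) (Comp C (tau L) (Comp C (Bm XX) v)))"
    unfolding Sub_def using comp_add_left[OF v P smul_in[OF Q]] comp_smul_left[OF v Q]
      comp_assoc[OF v tau_in x_in] comp_assoc[OF v Bm_in[OF x_in] tau_in] by simp
  moreover have "Comp C (Sub C (kcat.Id C BBL) ?R) v = Add C v (Smul C (-1) (Comp C (cup L) (Comp C (cap L) v)))"
    unfolding Sub_def using comp_add_left[OF v id_in smul_in[OF R]] comp_smul_left[OF v R]
      comp_assoc[OF v cap_in cup_in] id_left[OF v] by simp
  ultimately show ?thesis by simp
qed

definition w :: "'k poly \<Rightarrow> 'm" where "w p = Comp C (Bm (ev p)) (cup L)"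

lemma w_in[simp,intro]: "w p \<in> Hom C L BBL" unfolding w_def by auto

lemma w_add: "w (p + q) = Add C (w p) (w q)"
  unfolding w_def using ev_add Bm_add[OF ev_in ev_in] comp_add_left[OF cup_in Bm_in[OF ev_in] Bm_in[OF ev_in]] by simp

lemma w_smult: "w (smult c p) = Smul C c (w p)"
  unfolding w_def using ev_smult Bm_smul[OF ev_in] comp_smul_left[OF cup_in Bm_in[OF ev_in]] by simp

lemma w_0[simp]: "w 0 = Zero C L BBL"
  unfolding w_def using comp_zero_left[OF cup_in] by simp

lemma w_const: "w [:c:] = Smul C c (cup L)"
  unfolding w_def using ev_const Bm_smul[OF id_in] comp_smul_left[OF cup_in id_in] id_left[OF cup_in] by simp

lemma w_one: "w 1 = cup L"
  using w_const[of 1] smul_one[OF cup_in] by (simp add: one_pCons)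

lemma w_x2: "Comp C (Bm XX) (w p) = w (pCons 0 p)"
proof -
  have "Comp C (Bm XX) (w p) = Comp C (Comp C (Bm XX) (Bm (ev p))) (cup L)"
    unfolding w_def using comp_assoc[OF cup_in Bm_in[OF ev_in] Bm_in[OF x_in]] by simp
  also have "\<dots> = Comp C (Bm (Comp C XX (ev p))) (cup L)" using Bm_comp[OF ev_in x_in] by simp
  also have "\<dots> = w (pCons 0 p)" unfolding w_def using ev_x by simp
  finally show ?thesis .
qed

lemma w_x1: "Comp C (x BL) (w p) = Smul C (-1) (w (pCons 0 p))"
proof -
  have Bev: "Bm (ev p) \<in> Hom C BBL BBL" by auto
  have BX: "Bm XX \<in> Hom C BBL BBL" by auto
  have "Comp C (x BL) (w p) = Comp C (Comp C (x BL) (Bm (ev p))) (cup L)"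
    unfolding w_def using comp_assoc[OF cup_in Bev x_in] by simp
  also have "\<dots> = Comp C (Comp C (Bm (ev p)) (x BL)) (cup L)" using nat_x[OF ev_in[of p]] by simp
  also have "\<dots> = Comp C (Bm (ev p)) (Comp C (x BL) (cup L))" using comp_assoc[OF cup_in x_in Bev] by simp
  also have "\<dots> = Comp C (Bm (ev p)) (Smul C (-1) (Comp C (Bm XX) (cup L)))" using dot_cup[of L] by simp
  also have "\<dots> = Smul C (-1) (Comp C (Bm (ev p)) (Comp C (Bm XX) (cup L)))"
    using comp_smul_right[OF comp_in[OF cup_in BX] Bev] by simp
  also have "\<dots> = Smul C (-1) (Comp C (Comp C (Bm (ev p)) (Bm XX)) (cup L))"
    using comp_assoc[OF cup_in BX Bev] by simp
  also have "\<dots> = Smul C (-1) (Comp C (Bm (Comp C (ev p) XX)) (cup L))"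
    using Bm_comp[OF x_in ev_in] by simp
  also have "\<dots> = Smul C (-1) (w (pCons 0 p))" unfolding w_def using ev_xcomm ev_x by simp
  finally show ?thesis .
qed

lemma ev_from_w: "Comp C (cap BL) (Bm (w p)) = ev p"
proof -
  have Bev: "Bm (ev p) \<in> Hom C BBL BBL" by auto
  have Bcup: "Bm (cup L) \<in> Hom C BL (Bo BBL)" by auto
  have BBev: "Bm (Bm (ev p)) \<in> Hom C (Bo BBL) (Bo BBL)" by auto
  have "Comp C (cap BL) (Bm (w p)) = Comp C (cap BL) (Comp C (Bm (Bm (ev p))) (Bm (cup L)))"
    unfolding w_def using Bm_comp[OF cup_in Bev] by simp
  also have "\<dots> = Comp C (Comp C (cap BL) (Bm (Bm (ev p)))) (Bm (cup L))"
    using comp_assoc[OF Bcup BBev cap_in] by simp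
  also have "\<dots> = Comp C (Comp C (ev p) (cap BL)) (Bm (cup L))" using nat_cap[OF ev_in[of p]] by simp
  also have "\<dots> = Comp C (ev p) (Comp C (cap BL) (Bm (cup L)))" using comp_assoc[OF Bcup cap_in ev_in] by simp
  also have "\<dots> = ev p" using zz1[of L] id_right[OF ev_in] by simp
  finally show ?thesis .
qed

lemma w_zero_iff: "w p = Zero C L BBL \<longleftrightarrow> mp dvd p"
proof
  assume "w p = Zero C L BBL"
  then have "ev p = Comp C (cap BL) (Zero C BL (Bo BBL))" using ev_from_w[of p] by simp
  then have "ev p = Zero C BL BL" using comp_zero_right[OF cap_in] by simp
  then show "mp dvd p" using ev_zero_iff by simp
next
  assume "mp dvd p"
  then have "ev p = Zero C BL BL" using ev_zero_iff by simp
  then show "w p = Zero C L BBL" unfolding w_def using comp_zero_left[OF cup_in] by simp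
qed

lemma w_sub: "w (p - q) = Add C (w p) (Smul C (-1) (w q))"
proof -
  have "p - q = p + smult (-1) q" by simp
  then have "w (p - q) = w (p + smult (-1) q)" by simp
  also have "\<dots> = Add C (w p) (Smul C (-1) (w q))" by (simp only: w_add w_smult)
  finally show ?thesis .
qed

lemma w_eq_iff: "w p = w q \<longleftrightarrow> mp dvd (p - q)"
proof
  assume "w p = w q"
  then have "w (p - q) = Zero C L BBL" using w_sub add_neg[OF w_in] by simp
  then show "mp dvd (p - q)" using w_zero_iff by simp
next
  assume "mp dvd (p - q)"
  then have z: "w (p - q) = Zero C L BBL" using w_zero_iff by simp
  have "p = q + (p - q)" by simp
  then have "w p = Add C (w q) (w (p - q))" using w_add by metis
  then show "w p = w q" using z add_zero[OF w_in] by simp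
qed

end

context nbm begin

definition phi :: "'k poly \<Rightarrow> 'k" where
  "phi p = (SOME c. Comp C (cap L) (w p) = Smul C c (kcat.Id C L))"

lemma phi_eq: "Comp C (cap L) (w p) = Smul C (phi p) (kcat.Id C L)"
proof -
  have "Comp C (cap L) (w p) \<in> Hom C L L" by auto
  then have "\<exists>c. Comp C (cap L) (w p) = Smul C c (kcat.Id C L)" using spec_hom by auto
  then show ?thesis unfolding phi_def by (rule someI_ex)
qed

lemma smul_id_inj: "Smul C c (kcat.Id C L) = Smul C d (kcat.Id C L) \<Longrightarrow> c = d"
  using spec_inj unfolding inj_def by blast

lemma phi_add: "phi (p + q) = phi p + phi q"
proof (rule smul_id_inj)
  have "Smul C (phi (p + q)) (kcat.Id C L) = Comp C (cap L) (Add C (w p) (w q))" using phi_eq[of "p+q", unfolded w_add] by simp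
  also have "\<dots> = Add C (Comp C (cap L) (w p)) (Comp C (cap L) (w q))" using comp_add_right[OF w_in w_in cap_in] by simp
  also have "\<dots> = Smul C (phi p + phi q) (kcat.Id C L)" using phi_eq smul_add_scalar[OF id_in] by simp
  finally show "Smul C (phi (p + q)) (kcat.Id C L) = Smul C (phi p + phi q) (kcat.Id C L)" .
qed

lemma phi_smult: "phi (smult c p) = c * phi p"
proof (rule smul_id_inj)
  have "Smul C (phi (smult c p)) (kcat.Id C L) = Comp C (cap L) (Smul C c (w p))" using phi_eq[of "smult c p", unfolded w_smult] by simp
  also have "\<dots> = Smul C c (Comp C (cap L) (w p))" using comp_smul_right[OF w_in cap_in] by simp
  also have "\<dots> = Smul C (c * phi p) (kcat.Id C L)" using phi_eq smul_smul[OF id_in] by simp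
  finally show "Smul C (phi (smult c p)) (kcat.Id C L) = Smul C (c * phi p) (kcat.Id C L)" .
qed

lemma phi_cong: "w p = w q \<Longrightarrow> phi p = phi q" unfolding phi_def by simp

lemma phi_one: "phi 1 = of_nat t"
  by (rule smul_id_inj) (use phi_eq[of 1] w_one rel_capcup[of L] in simp)

definition PS :: "'k poly set" where "PS = {q. \<forall>i\<ge>dmin. coeff q i = 0}"

lemma PS_iff: "q \<in> PS \<longleftrightarrow> q = 0 \<or> degree q < dmin"
proof
  assume q: "q \<in> PS"
  show "q = 0 \<or> degree q < dmin"
  proof (rule ccontr)
    assume "\<not> (q = 0 \<or> degree q < dmin)"
    then have "q \<noteq> 0" "dmin \<le> degree q" by auto
    then show False using q unfolding PS_def by auto
  qed
next
  assume "q = 0 \<or> degree q < dmin"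
  then show "q \<in> PS" unfolding PS_def using coeff_eq_0 by fastforce
qed

lemma mod_PS: "p mod mp \<in> PS"
  unfolding PS_iff using degree_mod_less'[OF mp_nz] mp_props(3) by auto

lemma PS_dvd: assumes "q \<in> PS" "mp dvd q" shows "q = 0"
proof (rule ccontr)
  assume nz: "q \<noteq> 0"
  then have "degree q < dmin" using assms PS_iff by auto
  moreover have "degree mp \<le> degree q" using dvd_imp_degree_le[OF assms(2) nz] .
  ultimately show False using mp_props(3) by simp
qed

lemma PS_mod: "q \<in> PS \<Longrightarrow> q mod mp = q"
  using PS_iff mp_props(3) by (auto intro: mod_poly_less)

lemma PS_diff: "q1 \<in> PS \<Longrightarrow> q2 \<in> PS \<Longrightarrow> q1 - q2 \<in> PS" unfolding PS_def by simp

lemma w_inj_PS: "q1 \<in> PS \<Longrightarrow> q2 \<in> PS \<Longrightarrow> w q1 = w q2 \<Longrightarrow> q1 = q2"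
proof -
  assume a: "q1 \<in> PS" "q2 \<in> PS" "w q1 = w q2"
  then have "mp dvd (q1 - q2)" using w_eq_iff by simp
  then have "q1 - q2 = 0" using PS_dvd[OF PS_diff[OF a(1) a(2)]] by simp
  then show "q1 = q2" by simp
qed

lemma w_mod: "w (p mod mp) = w p"
proof -
  have "p - p mod mp = p div mp * mp" by (rule minus_mod_eq_div_mult)
  then have "mp dvd (p - p mod mp)" by simp
  then have "w p = w (p mod mp)" using w_eq_iff by simp
  then show ?thesis by simp
qed

lemma tau_x_w: assumes q: "Comp C (tau L) (w p) = w q"
  shows "Comp C (tau L) (w (pCons 0 p)) = w (smult (-1) (pCons 0 q) + smult (-1) (p + smult (-1) [:phi p:]))"
proof -
  let ?Y = "Comp C (tau L) (w (pCons 0 p))"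
  have Y: "?Y \<in> Hom C L BBL" by auto
  have k: "Add C (Comp C (x BL) (Comp C (tau L) (w p))) (Smul C (-1) (Comp C (tau L) (Comp C (Bm XX) (w p))))
       = Add C (w p) (Smul C (-1) (Comp C (cup L) (Comp C (cap L) (w p))))" by (rule key_v[OF w_in])
  have c: "Comp C (cup L) (Comp C (cap L) (w p)) = w [:phi p:]"
    using phi_eq comp_smul_right[OF id_in cup_in] id_right[OF cup_in] w_const by simp
  have k2: "Add C (Smul C (-1) (w (pCons 0 q))) (Smul C (-1) ?Y) = Add C (w p) (Smul C (-1) (w [:phi p:]))"
    using k q w_x1 w_x2 c by simp
  have "?Y = Add C (Smul C (-1) (w (pCons 0 q))) (Smul C (-1) (Add C (w p) (Smul C (-1) (w [:phi p:]))))"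
    by (rule solve_neg[OF _ Y _ k2]) auto
  also have "\<dots> = w (smult (-1) (pCons 0 q) + smult (-1) (p + smult (-1) [:phi p:]))"
    by (simp only: w_add w_smult)
  finally show ?thesis .
qed

lemma tau_w_ex: "\<exists>q. Comp C (tau L) (w p) = w q"
proof (induction p rule: pCons_induct)
  case 0
  have "Comp C (tau L) (w 0) = w 0" using comp_zero_right[OF tau_in, of L L] by simp
  then show ?case by (rule exI)
next
  case (pCons a p)
  then obtain q where q: "Comp C (tau L) (w p) = w q" by blast
  have Yin: "Comp C (tau L) (w (pCons 0 p)) \<in> Hom C L BBL" by auto
  have "w (pCons a p) = w ([:a:] + pCons 0 p)" by simp
  also have "\<dots> = Add C (w [:a:]) (w (pCons 0 p))" by (rule w_add)
  also have "\<dots> = Add C (Smul C a (cup L)) (w (pCons 0 p))" by (simp only: w_const)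
  finally have e: "w (pCons a p) = Add C (Smul C a (cup L)) (w (pCons 0 p))" .
  have "Comp C (tau L) (w (pCons a p)) = Comp C (tau L) (Add C (Smul C a (cup L)) (w (pCons 0 p)))"
    by (simp only: e)
  also have "\<dots> = Add C (Smul C a (Comp C (tau L) (cup L))) (Comp C (tau L) (w (pCons 0 p)))"
    using comp_add_right[OF smul_in[OF cup_in] w_in tau_in] comp_smul_right[OF cup_in tau_in] by simp
  also have "\<dots> = Comp C (tau L) (w (pCons 0 p))"
    by (simp only: tau_cup smul_Zero zero_add[OF Yin])
  also have "\<dots> = w (smult (-1) (pCons 0 q) + smult (-1) (p + smult (-1) [:phi p:]))"
    by (rule tau_x_w[OF q])
  finally show ?case by (rule exI)
qed

definition T :: "'k poly \<Rightarrow> 'k poly" where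
  "T p = (SOME q. q \<in> PS \<and> Comp C (tau L) (w p) = w q)"

lemma T_spec: "T p \<in> PS \<and> Comp C (tau L) (w p) = w (T p)"
proof -
  obtain q where q: "Comp C (tau L) (w p) = w q" using tau_w_ex by blast
  then have "q mod mp \<in> PS \<and> Comp C (tau L) (w p) = w (q mod mp)" using mod_PS w_mod by simp
  then show ?thesis unfolding T_def by (rule someI)
qed

lemma T_PS: "T p \<in> PS" using T_spec by blast
lemma T_w: "Comp C (tau L) (w p) = w (T p)" using T_spec by blast
lemma T_cong: "w p = w q \<Longrightarrow> T p = T q" unfolding T_def by simp

lemma PS_add: "q1 \<in> PS \<Longrightarrow> q2 \<in> PS \<Longrightarrow> q1 + q2 \<in> PS" unfolding PS_def by simp
lemma PS_smult: "q \<in> PS \<Longrightarrow> smult c q \<in> PS" unfolding PS_def by simp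
lemma PS_0: "0 \<in> PS" unfolding PS_def by simp

lemma T_add: "T (p + q) = T p + T q"
proof (rule w_inj_PS[OF T_PS PS_add[OF T_PS T_PS]])
  show "w (T (p + q)) = w (T p + T q)"
  proof -
    have "w (T (p + q)) = Comp C (tau L) (Add C (w p) (w q))" using T_w[of "p+q"] w_add by simp
    also have "\<dots> = Add C (w (T p)) (w (T q))" using comp_add_right[OF w_in w_in tau_in] T_w by simp
    also have "\<dots> = w (T p + T q)" using w_add by simp
    finally show ?thesis .
  qed
qed

lemma T_smult: "T (smult c p) = smult c (T p)"
proof (rule w_inj_PS[OF T_PS PS_smult[OF T_PS]])
  show "w (T (smult c p)) = w (smult c (T p))"
  proof -
    have "w (T (smult c p)) = Comp C (tau L) (Smul C c (w p))" using T_w[of "smult c p"] w_smult by simp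
    also have "\<dots> = Smul C c (w (T p))" using comp_smul_right[OF w_in tau_in] T_w by simp
    also have "\<dots> = w (smult c (T p))" using w_smult by simp
    finally show ?thesis .
  qed
qed

lemma T_T: "T (T p) = 0"
proof (rule w_inj_PS[OF T_PS PS_0])
  have "w (T (T p)) = Comp C (tau L) (Comp C (tau L) (w p))" using T_w by simp
  also have "\<dots> = Comp C (Comp C (tau L) (tau L)) (w p)" using comp_assoc[OF w_in tau_in tau_in] by simp
  also have "\<dots> = w 0" using rel_tt[of L] comp_zero_left[OF w_in] by simp
  finally show "w (T (T p)) = w 0" .
qed

lemma T_one: "T 1 = 0"
  by (rule w_inj_PS[OF T_PS PS_0]) (use T_w[of 1] w_one tau_cup[of L] in simp)

lemma phi_T: "phi (T p) = 0"
proof (rule smul_id_inj)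
  have "Smul C (phi (T p)) (kcat.Id C L) = Comp C (cap L) (Comp C (tau L) (w p))" using phi_eq T_w by simp
  also have "\<dots> = Comp C (Comp C (cap L) (tau L)) (w p)" using comp_assoc[OF w_in tau_in cap_in] by simp
  also have "\<dots> = Smul C 0 (kcat.Id C L)" using cap_tau[of L] comp_zero_left[OF w_in] smul_zero_scalar[OF id_in] by simp
  finally show "Smul C (phi (T p)) (kcat.Id C L) = Smul C 0 (kcat.Id C L)" .
qed

definition sig :: "'k poly \<Rightarrow> 'k poly" where "sig p = smult (phi p) (1 mod mp) - p"

lemma T_x: assumes "p \<in> PS" "T p = 0" shows "T (pCons 0 p) = sig p"
proof (rule w_inj_PS[OF T_PS])
  show "sig p \<in> PS" unfolding sig_def using assms(1) PS_diff PS_smult mod_PS by blast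
  have "w (T (pCons 0 p)) = w (smult (-1) (pCons 0 (T p)) + smult (-1) (p + smult (-1) [:phi p:]))"
    using tau_x_w[OF T_w[of p]] T_w[of "pCons 0 p"] by simp
  also have "\<dots> = w (smult (phi p) 1 - p)" using assms(2) by (simp add: algebra_simps smult_add_right)
  also have "\<dots> = w (sig p)" unfolding sig_def
    by (simp only: w_sub w_smult w_mod)
  finally show "w (T (pCons 0 p)) = w (sig p)" .
qed

lemma T_mod: "T (p mod mp) = T p" by (rule T_cong[OF w_mod])

lemma phi_mod: "phi (p mod mp) = phi p" by (rule phi_cong[OF w_mod])

end

context nbm begin

lemma PS_PSn: "PS = PSn dmin" unfolding PS_def PSn_def by simp

lemma T_lin: "Vector_Spaces.linear smult smult T"
  by (rule lin_polyI) (simp_all add: T_add T_smult)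

lemma sig_lin: "Vector_Spaces.linear smult smult sig"
proof (rule lin_polyI)
  fix p q show "sig (p + q) = sig p + sig q"
    unfolding sig_def phi_add by (simp add: smult_add_left algebra_simps)
next
  fix c p show "sig (smult c p) = smult c (sig p)"
    unfolding sig_def phi_smult by (simp add: smult_diff_right)
qed

lemma T_0: "T 0 = 0" using T_smult[of 0 0] by simp

lemma main_parity: assumes t01: "t \<in> {0, 1}" shows "dmin mod 2 = t"
proof -
  let ?K = "{p\<in>PS. T p = 0}" and ?I = "T ` PS" and ?M = "Mn dmin :: 'k poly set"
  have PSsub: "pv.subspace PS" using PSn_subspace PS_PSn by simp
  have PSsp: "PS \<subseteq> pv.span ?M" using PSn_span PS_PSn by simp
  have fM: "finite ?M" by (rule Mn_finite)
  have dimPS: "pv.dim PS = dmin" using dim_PSn PS_PSn by simp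
  have RN1: "pv.dim PS = pv.dim ?K + pv.dim ?I" by (rule rank_nullity[OF T_lin PSsub fM PSsp])
  have IK: "?I \<subseteq> ?K" using T_PS T_T by auto
  have Ksub: "pv.subspace ?K"
    unfolding pv.subspace_def using PS_0 T_0 PS_add T_add PS_smult T_smult by simp
  have Ksp: "?K \<subseteq> pv.span ?M" using PSsp by auto
  have Isp: "?I \<subseteq> pv.span ?M" using PSsp T_PS by auto
  have RN2: "pv.dim ?K = pv.dim {p\<in>?K. sig p = 0} + pv.dim (sig ` ?K)"
    by (rule rank_nullity[OF sig_lin Ksub fM Ksp])
  have sigK: "sig ` ?K \<subseteq> ?I"
  proof
    fix y assume "y \<in> sig ` ?K"
    then obtain p where p: "p \<in> PS" "T p = 0" "y = sig p" by auto
    have "y = T (pCons 0 p)" using T_x[OF p(1) p(2)] p(3) by simp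
    also have "\<dots> = T (pCons 0 p mod mp)" using T_mod by simp
    finally show "y \<in> ?I" using mod_PS by blast
  qed
  have d1: "pv.dim (sig ` ?K) \<le> pv.dim ?I" by (rule dim_mono_fin[OF sigK fM Isp])
  have d2: "pv.dim ?I \<le> pv.dim ?K" by (rule dim_mono_fin[OF IK fM Ksp])
  let ?e = "1 mod mp"
  have kerform: "\<And>p. sig p = 0 \<Longrightarrow> p = smult (phi p) ?e" unfolding sig_def by simp
  have phie: "phi ?e = of_nat t" using phi_mod phi_one by simp
  show ?thesis
  proof (cases "t = 0")
    case True
    have "{p\<in>?K. sig p = 0} \<subseteq> pv.span {}"
    proof
      fix p assume "p \<in> {p\<in>?K. sig p = 0}"
      then have p: "p = smult (phi p) ?e" using kerform by blast
      have "phi p = phi (smult (phi p) ?e)" using arg_cong[OF p, of phi] .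
      also have "\<dots> = phi p * phi ?e" by (rule phi_smult)
      finally have "phi p = phi p * phi ?e" .
      then have ph0: "phi p = 0" using phie True by simp
      from p have "p = smult 0 ?e" by (simp only: ph0)
      then have "p = 0" by simp
      then show "p \<in> pv.span {}" by simp
    qed
    then have "pv.dim {p\<in>?K. sig p = 0} \<le> card ({} :: 'k poly set)" by (rule pv.dim_le_card) simp
    then have "pv.dim {p\<in>?K. sig p = 0} = 0" by simp
    then have "pv.dim ?K = pv.dim ?I" using RN2 d1 d2 by simp
    then have "dmin = 2 * pv.dim ?I" using RN1 dimPS by simp
    then show ?thesis using True by simp
  next
    case False
    then have t1: "t = 1" using t01 by simp
    have "{p\<in>?K. sig p = 0} \<subseteq> pv.span {?e}"
    proof
      fix p assume "p \<in> {p\<in>?K. sig p = 0}"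
      then have p: "p = smult (phi p) ?e" using kerform by blast
      have "smult (phi p) ?e \<in> pv.span {?e}" by (intro pv.span_scale pv.span_base) simp
      then show "p \<in> pv.span {?e}" by (simp only: p[symmetric])
    qed
    then have "pv.dim {p\<in>?K. sig p = 0} \<le> card {?e}" by (rule pv.dim_le_card) simp
    then have k1: "pv.dim {p\<in>?K. sig p = 0} \<le> 1" by simp
    interpret lt: Vector_Spaces.linear smult smult T by (rule T_lin)
    have Isub: "pv.subspace ?I" by (rule lt.subspace_image[OF PSsub])
    have eK: "?e \<in> ?K" using mod_PS T_mod T_one by simp
    have eI: "?e \<notin> ?I"
    proof
      assume "?e \<in> ?I"
      then obtain q where "?e = T q" by auto
      then have "phi ?e = 0" using phi_T by simp
      then show False using phie t1 by simp
    qed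
    obtain BI where BI: "BI \<subseteq> ?I" "pv.independent BI" "?I \<subseteq> pv.span BI" "card BI = pv.dim ?I"
      by (rule pv.basis_exists)
    have spBI: "pv.span BI \<subseteq> ?I" using pv.span_minimal[OF BI(1) Isub] .
    have eBI: "?e \<notin> pv.span BI" using spBI eI by blast
    have ind: "pv.independent (insert ?e BI)" using pv.independent_insertI[OF eBI BI(2)] .
    have fBI: "finite BI" using pv.independent_span_bound[OF fM BI(2)] BI(1) Isp by auto
    have eBI2: "?e \<notin> BI" using BI(1) eI by blast
    have cI: "card (insert ?e BI) = pv.dim ?I + 1" using fBI eBI2 BI(4) by simp
    have subK: "insert ?e BI \<subseteq> ?K" using eK BI(1) IK by blast
    have "card (insert ?e BI) \<le> pv.dim ?K" by (rule card_indep_le_dim[OF ind subK fM Ksp])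
    then have "pv.dim ?K = pv.dim ?I + 1" using cI RN2 k1 d1 by simp
    then have "dmin = 2 * pv.dim ?I + 1" using RN1 dimPS by simp
    then show ?thesis using t1 by simp
  qed
qed

end

theorem corollary3p11:
  fixes C :: "('o, 'm, 'k::field) kcat"
    and t :: nat
    and Bo :: "'o \<Rightarrow> 'o" and Bm :: "'m \<Rightarrow> 'm"
    and x tau cap cup :: "'o \<Rightarrow> 'm"
    and L :: 'o
  assumes char: "(2::'k) \<noteq> 0"
    and t01: "t \<in> {0, 1}"
    and mod: "NB_module C t Bo Bm x tau cap cup"
    and spec: "special C Bo L"
  shows "degree (min_poly C (Bo L) (x L)) mod 2 = t"
proof -
  interpret N: nbm C t Bo Bm x tau cap cup L by (rule nbm.intro[OF mod spec])
  have "degree (min_poly C (Bo L) (x L)) = N.dmin" using N.mp_props(3) unfolding N.mp_def .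
  then show ?thesis using N.main_parity[OF t01] by simp
qed

end
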